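(* Assume $\eta_{i,S}=0$ for all $i\in\{1,\dots,N\}$, and let $M$ be a positive integer. Then for $n\in\{1,\dots,M\}$: $$\ln S_{nT/M}=\ln S_{(n-1)T/M}+\tfrac{T}{M}\tilde\mu_S+\varepsilon_{n,S},$$ $$\operatorname{diag}\Big(\Big(\tfrac{T_i}{T_i-nT/M}\Big)^{\kappa_i}\Big)Z_{nT/M}=\operatorname{diag}\Big(\Big(\tfrac{T_i}{T_i-(n-1)T/M}\Big)^{\kappa_i}\Big)Z_{(n-1)T/M}+\operatorname{diag}(\phi_{n,i})\,m+\varepsilon_{n,Z},$$ $$\log F_{nT/M,i}=Z_{nT/M,i}+\log S_{nT/M,i}+r\big(T_i-\tfrac{nT}{M}\big),\quad i=1,\dots,N,$$ where $\ln S_t$ is taken componentwise, $\tilde\mu_S:=(\mu_{1,S}-\frac12\sigma_{1,S}^2,\dots,\mu_{N,S}-\frac12\sigma_{N,S}^2)^\top$, $$\phi_{n,i}:=\begin{cases}\dfrac{T_i^{\kappa_i}}{\kappa_i-1}\Big(\big(T_i-\tfrac{nT}{M}\big)^{1-\kappa_i}-\big(T_i-\tfrac{(n-1)T}{M}\big)^{1-\kappa_i}\Big),&\kappa_i\ne1,\\[1ex] T_i\ln\Big(\dfrac{T_i-(n-1)T/M}{T_i-nT/M}\Big),&\kappa_i=1,\end{cases}$$ and $\{\varepsilon_n=(\varepsilon_{n,S},\varepsilon_{n,Z})\}_{n=1}^M$ are independent Gaussian random vectors with $\mathbb E(\varepsilon_n)=0$, $\mathbb E(\varepsilon_{n,S}\varepsilon_{n,S}^\top)=\frac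 TM\Sigma_S$, $\mathbb E(\varepsilon_{n,S}\varepsilon_{n,Z}^\top)=(\Sigma_{FS}^\top-\Sigma_S)\operatorname{diag}(\phi_{n,i})$, and $\mathbb E(\varepsilon_{n,Z}\varepsilon_{n,Z}^\top)=[c_{ij;n}]_{N\times N}$ with $$c_{ij;n}:=\beta_{ij}\int_{(n-1)T/M}^{nT/M}\Big(\frac{T_i}{T_i-s}\Big)^{\kappa_i}\Big(\frac{T_j}{T_j-s}\Big)^{\kappa_j}ds,$$ $\beta_{ij}$ being the $(i,j)$ entry of $\Sigma_F+\Sigma_S-\Sigma_{FS}-\Sigma_{FS}^\top$.
   Context: Market model: $N\ge1$ is an integer, $r\ge0$ a constant interest rate, $T>0$ the trading horizon, and $T_1,\dots,T_N$ futures maturities with $T<T_i$ for all $i$. On a filtered probability space with Brownian filtration satisfying the usual conditions, $W_t=(W_{t,1},\dots,W_{t,2N})^\top$ is a standard $2N$-dimensional Brownian motion. Let $\tilde\Sigma=[\tilde\sigma_{ij}]$ be a real $2N\times2N$ lower triangular matrix ($\tilde\sigma_{ij}=0$ for $j>i$) and $\Sigma:=\tilde\Sigma\tilde\Sigma^\top=\begin{pmatrix}\Sigma_F&\Sigma_{FS}\\ \Sigma_{FS}^\top&\Sigma_S\end{pmatrix}$ ($N\times N$ blocks), assumed positive definite; $\sigma_{i,F}:=\sqrt{\Sigma_{ii}}$, $\sigma_{i,S}:=\sqrt{\Sigma_{N+i,N+i}}$. Constants $\mu_{i,F},\mu_{i,S},\eta_{i,F},\eta_{i,S}$ satisfy $\eta_{i,F}<\eta_{i,S}$.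 Futures prices $F_{t,i}$ and spot prices $S_{t,i}$ satisfy $dF_{t,i}=F_{t,i}\big[(\mu_{i,F}+\tfrac{\eta_{i,F}}{T_i-t}Z_{t,i})dt+\sum_{j=1}^{i}\tilde\sigma_{i,j}dW_{t,j}\big]$, $dS_{t,i}=S_{t,i}\big[(\mu_{i,S}+\tfrac{\eta_{i,S}}{T_i-t}Z_{t,i})dt+\sum_{j=1}^{N+i}\tilde\sigma_{N+i,j}dW_{t,j}\big]$, where $Z_{t,i}:=\log(F_{t,i}/S_{t,i})-r(T_i-t)$, $0\le t\le T$. Vectors: $S_t=(S_{t,i})_i$, $Z_t=(Z_{t,i})_i$; $m=(m_i)$ with $m_i=r+\mu_{i,F}-\mu_{i,S}-\frac12(\sigma_{i,F}^2-\sigma_{i,S}^2)$; $\kappa_i:=\eta_{i,S}-\eta_{i,F}>0$. For a vector $(a_1,\dots,a_N)$, $\operatorname{diag}(a_i)$ is the diagonal matrix with these entries. *)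

theory Defs
  imports "HOL-Probability.Probability"
begin

text \<open>Indices are 1-based: futures/spot indices i range over {1..N},
Brownian components over {1..2N}. Matrices are functions nat => nat => real.\<close>

definition cov_of :: "nat \<Rightarrow> (nat \<Rightarrow> nat \<Rightarrow> real) \<Rightarrow> nat \<Rightarrow> nat \<Rightarrow> real" where
  "cov_of d tS i j = (\<Sum>k\<in>{1..d}. tS i k * tS j k)"

definition lower_triangular :: "nat \<Rightarrow> (nat \<Rightarrow> nat \<Rightarrow> real) \<Rightarrow> bool" where
  "lower_triangular d A \<longleftrightarrow> (\<forall>i\<in>{1..d}. \<forall>j\<in>{1..d}. i < j \<longrightarrow> A i j = 0)"

definition pos_def :: "nat \<Rightarrow> (nat \<Rightarrow> nat \<Rightarrow> real) \<Rightarrow> bool" where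
  "pos_def d A \<longleftrightarrow> (\<forall>x :: nat \<Rightarrow> real. (\<exists>i\<in>{1..d}. x i \<noteq> 0) \<longrightarrow>
      (\<Sum>i\<in>{1..d}. \<Sum>j\<in>{1..d}. x i * A i j * x j) > 0)"

definition gaussian_rv :: "'a measure \<Rightarrow> ('a \<Rightarrow> real) \<Rightarrow> bool" where
  "gaussian_rv M X \<longleftrightarrow> X \<in> borel_measurable M \<and>
     ((\<exists>\<mu> \<sigma>. \<sigma> > 0 \<and> distributed M lborel X (normal_density \<mu> \<sigma>)) \<or>
      (\<exists>c. AE \<omega> in M. X \<omega> = c))"

definition gaussian_vector :: "'a measure \<Rightarrow> nat set \<Rightarrow> (nat \<Rightarrow> 'a \<Rightarrow> real) \<Rightarrow> bool" where
  "gaussian_vector M I X \<longleftrightarrow> (\<forall>c :: nat \<Rightarrow> real. gaussian_rv M (\<lambda>\<omega>. \<Sum>k\<in>I. c k * X k \<omega>))"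

definition std_brownian :: "'a measure \<Rightarrow> nat \<Rightarrow> (real \<Rightarrow> nat \<Rightarrow> 'a \<Rightarrow> real) \<Rightarrow> bool" where
  "std_brownian M d W \<longleftrightarrow>
     (\<forall>t\<ge>0. \<forall>j\<in>{1..d}. W t j \<in> borel_measurable M) \<and>
     (\<forall>\<omega>\<in>space M. \<forall>j\<in>{1..d}. W 0 j \<omega> = 0 \<and> continuous_on {0..} (\<lambda>t. W t j \<omega>)) \<and>
     (\<forall>(ts :: nat \<Rightarrow> real) K. 0 \<le> ts 0 \<and> (\<forall>k<K. ts k < ts (Suc k)) \<longrightarrow>
        prob_space.indep_vars M (\<lambda>_. borel)
          (\<lambda>p \<omega>. W (ts (Suc (fst p))) (snd p) \<omega> - W (ts (fst p)) (snd p) \<omega>)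
          ({..<K} \<times> {1..d}) \<and>
        (\<forall>k<K. \<forall>j\<in>{1..d}. distributed M lborel
           (\<lambda>\<omega>. W (ts (Suc k)) j \<omega> - W (ts k) j \<omega>)
           (normal_density 0 (sqrt (ts (Suc k) - ts k)))))"

definition Z_proc :: "real \<Rightarrow> (nat \<Rightarrow> real) \<Rightarrow> (real \<Rightarrow> nat \<Rightarrow> 'a \<Rightarrow> real) \<Rightarrow>
    (real \<Rightarrow> nat \<Rightarrow> 'a \<Rightarrow> real) \<Rightarrow> real \<Rightarrow> nat \<Rightarrow> 'a \<Rightarrow> real" where
  "Z_proc r Tm F S t i \<omega> = ln (F t i \<omega> / S t i \<omega>) - r * (Tm i - t)"

definition phi_coef :: "real \<Rightarrow> nat \<Rightarrow> real \<Rightarrow> real \<Rightarrow> nat \<Rightarrow> real" where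
  "phi_coef T M Ti \<kappa> n =
     (if \<kappa> \<noteq> 1 then
        Ti powr \<kappa> / (\<kappa> - 1) *
          ((Ti - real n * T / real M) powr (1 - \<kappa>) - (Ti - real (n - 1) * T / real M) powr (1 - \<kappa>))
      else Ti * ln ((Ti - real (n - 1) * T / real M) / (Ti - real n * T / real M)))"

end

theory Submission
  imports Defs
begin

definition grid :: "real \<Rightarrow> real \<Rightarrow> nat \<Rightarrow> nat \<Rightarrow> real" where
  "grid a b K p = a + real p * (b - a) / real K"

lemma grid_mono: "a \<le> b \<Longrightarrow> p \<le> q \<Longrightarrow> grid a b K p \<le> grid a b K q"
  unfolding grid_def by (intro add_left_mono divide_right_mono mult_right_mono) auto

lemma grid_0[simp]: "grid a b K 0 = a" by (simp add: grid_def)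
lemma grid_K[simp]: "K > 0 \<Longrightarrow> grid a b K K = b" by (simp add: grid_def)
lemma grid_Suc: "grid a b K (Suc p) - grid a b K p = (b - a) / real K"
  by (cases "K = 0") (simp_all add: grid_def field_simps)

lemma grid_in: "a \<le> b \<Longrightarrow> p \<le> K \<Longrightarrow> K > 0 \<Longrightarrow> grid a b K p \<in> {a..b}"
  using grid_mono[of a b 0 p K] grid_mono[of a b p K K] by auto

lemma integral_split_grid:
  fixes f :: "real \<Rightarrow> real"
  assumes ab: "a \<le> b" and K: "K > 0" and f: "f integrable_on {a..b}"
  shows "integral {a..b} f = (\<Sum>p<K. integral {grid a b K p..grid a b K (Suc p)} f)"
proof -
  have "q \<le> K \<Longrightarrow> integral {a..grid a b K q} f = (\<Sum>p<q. integral {grid a b K p..grid a b K (Suc p)} f)" for q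
  proof (induction q)
    case 0 then show ?case by simp
  next
    case (Suc q)
    have le: "grid a b K q \<le> grid a b K (Suc q)" "a \<le> grid a b K q" 
      using grid_mono[OF ab, of q "Suc q" K] grid_mono[OF ab, of 0 q K] by auto
    have sub: "{a..grid a b K (Suc q)} \<subseteq> {a..b}" using grid_in[OF ab Suc.prems K] by auto
    have fi: "f integrable_on {a..grid a b K (Suc q)}"
      by (rule integrable_on_subinterval[OF f sub])
    have "integral {a..grid a b K (Suc q)} f = integral {a..grid a b K q} f + integral {grid a b K q..grid a b K (Suc q)} f"
      using Henstock_Kurzweil_Integration.integral_combine[OF le(2) le(1) fi] by simp
    then show ?case using Suc by simp
  qed
  from this[of K] K show ?thesis by simp
qed

lemma riemann_conv:
  fixes u h :: "real \<Rightarrow> real" and \<tau> :: "nat \<Rightarrow> nat \<Rightarrow> real"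
  assumes ab: "a < b" and u: "continuous_on {a..b} u" and h: "continuous_on {a..b} h"
    and tau: "\<And>K p. p < K \<Longrightarrow> \<tau> K p \<in> {grid a b K p..grid a b K (Suc p)}"
  shows "(\<lambda>K. \<Sum>p<K. integral {grid a b K p..grid a b K (Suc p)} u * h (\<tau> K p))
           \<longlonglongrightarrow> integral {a..b} (\<lambda>s. u s * h s)"
proof (rule LIMSEQ_I)
  fix e :: real assume e: "e > 0"
  obtain B where B: "B > 0" "\<And>x. x \<in> {a..b} \<Longrightarrow> \<bar>u x\<bar> \<le> B"
  proof -
    have "bounded (u ` {a..b})" by (intro compact_imp_bounded compact_continuous_image u) auto
    then obtain B0 where "\<forall>x\<in>u ` {a..b}. norm x \<le> B0" by (auto simp: bounded_iff)
    then show ?thesis by (intro that[of "max B0 1"]) (auto intro: max.coboundedI1 order_trans)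
  qed
  define e' where "e' = e / (2 * B * (b - a))"
  have e': "e' > 0" using e B ab by (simp add: e'_def)
  have "uniformly_continuous_on {a..b} h" by (rule compact_uniformly_continuous[OF h]) auto
  then obtain d where d: "d > 0" "\<And>x x'. x \<in> {a..b} \<Longrightarrow> x' \<in> {a..b} \<Longrightarrow> dist x' x < d \<Longrightarrow> dist (h x') (h x) < e'"
    unfolding uniformly_continuous_on_def using e' by metis
  obtain no :: nat where no: "(b - a) / d < real no" using reals_Archimedean2 by blast
  have no1: "no > 0" using no ab d by (cases no) (auto simp: field_simps)
  show "\<exists>no. \<forall>n\<ge>no. norm ((\<Sum>p<n. integral {grid a b n p..grid a b n (Suc p)} u * h (\<tau> n p)) - integral {a..b} (\<lambda>s. u s * h s)) < e"
  proof (intro exI allI impI)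
    fix K assume K: "no \<le> K"
    have K0: "K > 0" using K no1 by simp
    have step: "(b - a) / real K < d"
    proof -
      have "(b - a) / real K \<le> (b - a) / real no" using K no1 ab by (intro divide_left_mono) auto
      also have "\<dots> < d" using no d no1 by (simp add: field_simps)
      finally show ?thesis .
    qed
    let ?g = "grid a b K"
    have uh_int: "(\<lambda>s. u s * h s) integrable_on {a..b}"
      by (intro integrable_continuous_real continuous_intros u h)
    have sub: "p < K \<Longrightarrow> {?g p..?g (Suc p)} \<subseteq> {a..b}" for p
      using grid_in[of a b p K] grid_in[of a b "Suc p" K] ab K0 by auto
    have eq: "(\<Sum>p<K. integral {?g p..?g (Suc p)} u * h (\<tau> K p)) - integral {a..b} (\<lambda>s. u s * h s)
       = (\<Sum>p<K. integral {?g p..?g (Suc p)} (\<lambda>s. u s * (h (\<tau> K p) - h s)))"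
    proof -
      have "integral {a..b} (\<lambda>s. u s * h s) = (\<Sum>p<K. integral {?g p..?g (Suc p)} (\<lambda>s. u s * h s))"
        using integral_split_grid[OF less_imp_le[OF ab] K0 uh_int] .
      moreover have "integral {?g p..?g (Suc p)} (\<lambda>s. u s * (h (\<tau> K p) - h s))
          = integral {?g p..?g (Suc p)} u * h (\<tau> K p) - integral {?g p..?g (Suc p)} (\<lambda>s. u s * h s)"
        if "p < K" for p
      proof -
        have ui: "u integrable_on {?g p..?g (Suc p)}"
          using integrable_on_subinterval[OF integrable_continuous_real[OF u] sub[OF that]] .
        have uhi: "(\<lambda>s. u s * h s) integrable_on {?g p..?g (Suc p)}"
          using integrable_on_subinterval[OF uh_int sub[OF that]] .
        have "integral {?g p..?g (Suc p)} (\<lambda>s. u s * (h (\<tau> K p) - h s))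
            = integral {?g p..?g (Suc p)} (\<lambda>s. u s * h (\<tau> K p) - u s * h s)"
          by (simp add: algebra_simps)
        also have "\<dots> = integral {?g p..?g (Suc p)} (\<lambda>s. u s * h (\<tau> K p)) - integral {?g p..?g (Suc p)} (\<lambda>s. u s * h s)"
          by (rule integral_diff[OF integrable_on_mult_left[OF ui] uhi])
        also have "integral {?g p..?g (Suc p)} (\<lambda>s. u s * h (\<tau> K p)) = integral {?g p..?g (Suc p)} u * h (\<tau> K p)"
          by simp
        finally show ?thesis .
      qed
      ultimately show ?thesis by (simp add: sum_subtractf[symmetric])
    qed
    have bnd: "\<bar>integral {?g p..?g (Suc p)} (\<lambda>s. u s * (h (\<tau> K p) - h s))\<bar> \<le> B * e' * (?g (Suc p) - ?g p)"
      if p: "p < K" for p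
    proof -
      have le: "?g p \<le> ?g (Suc p)" using grid_mono[of a b p "Suc p"] ab by auto
      have "norm (integral {?g p..?g (Suc p)} (\<lambda>s. u s * (h (\<tau> K p) - h s))) \<le> (B * e') * (?g (Suc p) - ?g p)"
      proof (rule integral_bound[OF le])
        show "continuous_on {?g p..?g (Suc p)} (\<lambda>s. u s * (h (\<tau> K p) - h s))"
          using sub[OF p] by (intro continuous_intros continuous_on_subset[OF u] continuous_on_subset[OF h]) auto
        fix t assume t: "t \<in> {?g p..?g (Suc p)}"
        have ta: "t \<in> {a..b}" using t sub[OF p] by auto
        have taua: "\<tau> K p \<in> {a..b}" using tau[OF p] sub[OF p] by auto
        have "dist (\<tau> K p) t < d"
        proof -
          have "dist (\<tau> K p) t \<le> ?g (Suc p) - ?g p" using t tau[OF p] by (auto simp: dist_real_def)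
          also have "\<dots> = (b - a) / real K" by (rule grid_Suc)
          finally show ?thesis using step by simp
        qed
        then have "\<bar>h (\<tau> K p) - h t\<bar> < e'" using d(2)[OF ta taua] by (simp add: dist_real_def)
        then have "\<bar>u t\<bar> * \<bar>h (\<tau> K p) - h t\<bar> \<le> B * e'"
          using B(2)[OF ta] by (intro mult_mono) auto
        then show "norm (u t * (h (\<tau> K p) - h t)) \<le> B * e'" by (simp add: abs_mult)
      qed
      then show ?thesis by simp
    qed
    have "\<bar>\<Sum>p<K. integral {?g p..?g (Suc p)} (\<lambda>s. u s * (h (\<tau> K p) - h s))\<bar> \<le> (\<Sum>p<K. B * e' * (?g (Suc p) - ?g p))"
      by (rule order_trans[OF sum_abs]) (intro sum_mono bnd, auto)
    also have "\<dots> = B * e' * (b - a)"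
      using K0 by (simp add: sum_distrib_left[symmetric] sum_lessThan_telescope)
    also have "\<dots> = e / 2" using B ab by (simp add: e'_def field_simps)
    finally show "norm ((\<Sum>p<K. integral {?g p..?g (Suc p)} u * h (\<tau> K p)) - integral {a..b} (\<lambda>s. u s * h s)) < e"
      using eq e by simp
  qed
qed

definition SI :: "(real \<Rightarrow> nat \<Rightarrow> 'a \<Rightarrow> real) \<Rightarrow> real \<Rightarrow> real \<Rightarrow> (real \<Rightarrow> real) \<Rightarrow> (real \<Rightarrow> real) \<Rightarrow> nat \<Rightarrow> 'a \<Rightarrow> real" where
  "SI W a b f f' k \<omega> = f b * (W b k \<omega> - W a k \<omega>) - integral {a..b} (\<lambda>s. f' s * (W s k \<omega> - W a k \<omega>))"

definition LSI :: "(real \<Rightarrow> nat \<Rightarrow> 'a \<Rightarrow> real) \<Rightarrow> nat \<Rightarrow> real \<Rightarrow> real \<Rightarrow> (nat \<Rightarrow> real \<Rightarrow> real) \<Rightarrow> (nat \<Rightarrow> real \<Rightarrow> real) \<Rightarrow> 'a \<Rightarrow> real" where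
  "LSI W d a b F F' \<omega> = (\<Sum>k\<in>{1..d}. SI W a b (F k) (F' k) k \<omega>)"

definition RS :: "(real \<Rightarrow> nat \<Rightarrow> 'a \<Rightarrow> real) \<Rightarrow> nat \<Rightarrow> real \<Rightarrow> real \<Rightarrow> (nat \<Rightarrow> real \<Rightarrow> real) \<Rightarrow> nat \<Rightarrow> 'a \<Rightarrow> real" where
  "RS W d a b F K \<omega> = (\<Sum>k\<in>{1..d}. \<Sum>p<K. F k (grid a b K p) * (W (grid a b K (Suc p)) k \<omega> - W (grid a b K p) k \<omega>))"

definition C1 :: "real \<Rightarrow> real \<Rightarrow> (real \<Rightarrow> real) \<Rightarrow> (real \<Rightarrow> real) \<Rightarrow> bool" where
  "C1 a b f f' \<longleftrightarrow> (\<forall>x\<in>{a..b}. (f has_real_derivative f' x) (at x within {a..b})) \<and> continuous_on {a..b} f'"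

lemma abel_sum:
  fixes f D :: "nat \<Rightarrow> real"
  assumes "D 0 = 0"
  shows "(\<Sum>p<q. f p * (D (Suc p) - D p)) = f q * D q - (\<Sum>p<q. (f (Suc p) - f p) * D (Suc p))"
  using assms by (induction q) (simp_all add: algebra_simps)

lemma C1_cont: "C1 a b f f' \<Longrightarrow> continuous_on {a..b} f"
  unfolding C1_def
  by (meson DERIV_continuous continuous_on_eq_continuous_within)

lemma C1_integral:
  assumes "C1 a b f f'" "a \<le> c" "c \<le> e" "e \<le> b"
  shows "integral {c..e} f' = f e - f c"
proof -
  have "(f' has_integral (f e - f c)) {c..e}"
  proof (rule fundamental_theorem_of_calculus[OF assms(3)])
    fix x assume x: "x \<in> {c..e}"
    then have "(f has_real_derivative f' x) (at x within {a..b})" using assms unfolding C1_def by auto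
    then have "(f has_real_derivative f' x) (at x within {c..e})"
      by (rule has_field_derivative_subset) (use assms in auto)
    then show "(f has_vector_derivative f' x) (at x within {c..e})"
      by (simp add: has_real_derivative_iff_has_vector_derivative)
  qed
  then show ?thesis by (rule integral_unique)
qed

lemma RS_conv_single:
  fixes w :: "real \<Rightarrow> real"
  assumes ab: "a < b" and f: "C1 a b f f'" and w: "continuous_on {a..b} w"
  shows "(\<lambda>K. \<Sum>p<K. f (grid a b K p) * (w (grid a b K (Suc p)) - w (grid a b K p)))
     \<longlonglongrightarrow> f b * (w b - w a) - integral {a..b} (\<lambda>s. f' s * (w s - w a))"
proof -
  let ?X = "\<lambda>K. f b * (w b - w a) - (\<Sum>p<K. integral {grid a b K p..grid a b K (Suc p)} f' * (w (grid a b K (Suc p)) - w a))"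
  have lim: "?X \<longlonglongrightarrow> f b * (w b - w a) - integral {a..b} (\<lambda>s. f' s * (w s - w a))"
    apply (intro tendsto_diff tendsto_const)
    apply (rule riemann_conv[OF ab, where \<tau>="\<lambda>K p. grid a b K (Suc p)"])
    using f w ab by (auto simp: C1_def intro!: continuous_intros grid_mono)
  have ev: "\<forall>\<^sub>F K in sequentially. ?X K = (\<Sum>p<K. f (grid a b K p) * (w (grid a b K (Suc p)) - w (grid a b K p)))"
    unfolding eventually_sequentially
  proof (intro exI[of _ 1] allI impI)
    fix K :: nat assume K: "1 \<le> K"
    let ?g = "grid a b K"
    have "(\<Sum>p<K. f (?g p) * ((w (?g (Suc p)) - w a) - (w (?g p) - w a)))
        = f (?g K) * (w (?g K) - w a) - (\<Sum>p<K. (f (?g (Suc p)) - f (?g p)) * (w (?g (Suc p)) - w a))"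
      using abel_sum[of "\<lambda>p. w (?g p) - w a" "\<lambda>p. f (?g p)" K] by simp
    moreover have "integral {?g p..?g (Suc p)} f' = f (?g (Suc p)) - f (?g p)" if "p < K" for p
      apply (rule C1_integral[OF f])
      using grid_in[of a b p K] grid_in[of a b "Suc p" K] grid_mono[of a b p "Suc p" K] ab K that by auto
    ultimately show "?X K = (\<Sum>p<K. f (?g p) * (w (?g (Suc p)) - w (?g p)))"
      using K by simp
  qed
  show ?thesis by (rule Lim_transform_eventually[OF lim ev])
qed

lemma RS_conv:
  assumes ab: "a < b" and F: "\<And>k. k \<in> {1..d} \<Longrightarrow> C1 a b (F k) (F' k)"
    and w: "\<And>k. k \<in> {1..d} \<Longrightarrow> continuous_on {a..b} (\<lambda>s. W s k \<omega>)"
  shows "(\<lambda>K. RS W d a b F K \<omega>) \<longlonglongrightarrow> LSI W d a b F F' \<omega>"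
  unfolding RS_def LSI_def SI_def
  by (intro tendsto_sum RS_conv_single[OF ab] F w)

lemma SI_lin:
  assumes "finite J" and "\<And>j. j \<in> J \<Longrightarrow> continuous_on {a..b} (f' j)"
    and w: "continuous_on {a..b} (\<lambda>s. W s k \<omega>)"
  shows "SI W a b (\<lambda>s. \<Sum>j\<in>J. c j * f j s) (\<lambda>s. \<Sum>j\<in>J. c j * f' j s) k \<omega> = (\<Sum>j\<in>J. c j * SI W a b (f j) (f' j) k \<omega>)"
proof -
  have int: "\<And>j. j \<in> J \<Longrightarrow> (\<lambda>s. c j * (f' j s * (W s k \<omega> - W a k \<omega>))) integrable_on {a..b}"
    using assms by (intro integrable_continuous_real continuous_intros) auto
  have "integral {a..b} (\<lambda>s. (\<Sum>j\<in>J. c j * f' j s) * (W s k \<omega> - W a k \<omega>))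
      = integral {a..b} (\<lambda>s. \<Sum>j\<in>J. c j * (f' j s * (W s k \<omega> - W a k \<omega>)))"
    by (rule integral_cong) (simp add: sum_distrib_left sum_distrib_right mult_ac)
  also have "\<dots> = (\<Sum>j\<in>J. integral {a..b} (\<lambda>s. c j * (f' j s * (W s k \<omega> - W a k \<omega>))))"
    by (rule integral_sum[OF assms(1) int])
  also have "\<dots> = (\<Sum>j\<in>J. c j * integral {a..b} (\<lambda>s. f' j s * (W s k \<omega> - W a k \<omega>)))"
    by simp
  finally have I: "integral {a..b} (\<lambda>s. (\<Sum>j\<in>J. c j * f' j s) * (W s k \<omega> - W a k \<omega>))
      = (\<Sum>j\<in>J. c j * integral {a..b} (\<lambda>s. f' j s * (W s k \<omega> - W a k \<omega>)))" .
  show ?thesis unfolding SI_def I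
    by (simp only: sum_distrib_right right_diff_distrib sum_subtractf mult.assoc)
qed

lemma LSI_lin:
  assumes "finite J" and "\<And>j k. j \<in> J \<Longrightarrow> k \<in> {1..d} \<Longrightarrow> continuous_on {a..b} (F' j k)"
    and w: "\<And>k. k \<in> {1..d} \<Longrightarrow> continuous_on {a..b} (\<lambda>s. W s k \<omega>)"
  shows "LSI W d a b (\<lambda>k s. \<Sum>j\<in>J. c j * F j k s) (\<lambda>k s. \<Sum>j\<in>J. c j * F' j k s) \<omega> = (\<Sum>j\<in>J. c j * LSI W d a b (F j) (F' j) \<omega>)"
proof -
  have "SI W a b (\<lambda>s. \<Sum>j\<in>J. c j * F j k s) (\<lambda>s. \<Sum>j\<in>J. c j * F' j k s) k \<omega> = (\<Sum>j\<in>J. c j * SI W a b (F j k) (F' j k) k \<omega>)"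
    if k: "k \<in> {1..d}" for k
    by (rule SI_lin[OF assms(1)]) (use assms k in auto)
  then show ?thesis unfolding LSI_def
    by (simp add: sum_distrib_left sum.swap[of _ J])
qed

lemma distr_lborel_borel: "distr M lborel X = distr M borel X"
  by (rule distr_cong) auto

lemma (in prob_space) normal_cf:
  assumes X: "distributed M lborel X (normal_density 0 \<sigma>)" and s: "\<sigma> > 0"
  shows "(CLINT \<omega>|M. iexp (t * X \<omega>)) = complex_of_real (exp (- ((\<sigma> * t)^2) / 2))"
proof -
  have Y: "distributed M lborel (\<lambda>x. (X x - 0) / \<sigma>) std_normal_density"
    using normal_standard_normal_convert[OF s, of X 0] X by simp
  then have Ym: "(\<lambda>x. X x / \<sigma>) \<in> measurable M lborel" and
    Yd: "distr M lborel (\<lambda>x. X x / \<sigma>) = std_normal_distribution"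
    by (auto simp: distributed_def)
  have "(CLINT \<omega>|M. iexp (t * X \<omega>)) = (CLINT \<omega>|M. iexp ((t * \<sigma>) * (X \<omega> / \<sigma>)))"
    using s by (simp add: field_simps)
  also have "\<dots> = (CLINT y|distr M lborel (\<lambda>x. X x / \<sigma>). iexp ((t * \<sigma>) * y))"
    by (rule integral_distr[symmetric, OF Ym]) simp
  also have "\<dots> = char std_normal_distribution (t * \<sigma>)"
    unfolding Yd char_def ..
  also have "\<dots> = complex_of_real (exp (- ((\<sigma> * t)^2) / 2))"
    by (simp add: char_std_normal_distribution mult.commute)
  finally show ?thesis .
qed

lemma (in prob_space) gauss_from_char:
  fixes X :: "'a \<Rightarrow> real"
  assumes Xm: "X \<in> borel_measurable M" and v: "v \<ge> 0"
    and cf: "\<And>t. (CLINT \<omega>|M. iexp (t * X \<omega>)) = complex_of_real (exp (- (t^2 * v) / 2))"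
  shows "gaussian_rv M X \<and> integrable M X \<and> integral\<^sup>L M X = 0
       \<and> integrable M (\<lambda>\<omega>. X \<omega>^2) \<and> integral\<^sup>L M (\<lambda>\<omega>. X \<omega>^2) = v"
proof -
  define \<mu> where "\<mu> = distr M borel X"
  have rd: "real_distribution \<mu>" unfolding \<mu>_def using Xm by simp
  have cmu: "char \<mu> t = complex_of_real (exp (- (t^2 * v) / 2))" for t
  proof -
    have "char \<mu> t = (CLINT \<omega>|M. iexp (t * X \<omega>))" unfolding \<mu>_def char_def
      by (rule integral_distr[OF Xm]) measurable
    then show ?thesis using cf by simp
  qed
  show ?thesis
  proof (cases "v > 0")
    case True
    define \<sigma> where "\<sigma> = sqrt v"
    have s: "\<sigma> > 0" using True by (simp add: \<sigma>_def)
    have s2: "\<sigma>^2 = v" using v by (simp add: \<sigma>_def)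
    define \<nu> where "\<nu> = density lborel (normal_density 0 \<sigma>)"
    have ps: "prob_space \<nu>" unfolding \<nu>_def using prob_space_normal_density[OF s] by simp
    have rdn: "real_distribution \<nu>"
      unfolding real_distribution_def real_distribution_axioms_def using ps by (simp add: \<nu>_def)
    have dn: "distributed \<nu> lborel (\<lambda>x. x) (normal_density 0 \<sigma>)"
      unfolding distributed_def by (simp add: distr_id2 \<nu>_def)
    have cnu: "char \<nu> t = complex_of_real (exp (- (t^2 * v) / 2))" for t
      using prob_space.normal_cf[OF ps dn s, of t] unfolding char_def
      by (simp add: power_mult_distrib s2 mult.commute)
    have "\<mu> = \<nu>" by (rule Levy_uniqueness[OF rd rdn]) (simp add: fun_eq_iff cmu cnu)
    then have D: "distributed M lborel X (normal_density 0 \<sigma>)"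
      unfolding distributed_def using Xm by (simp add: \<mu>_def \<nu>_def distr_lborel_borel)
    have E: "expectation X = 0" by (rule normal_distributed_expectation[OF s D])
    have V: "variance X = \<sigma>^2" by (rule normal_distributed_variance[OF s D])
    have iX: "integrable M X"
      using distributed_integrable[OF D, of "\<lambda>x. x"] integrable_normal_moment_nz_1[OF s, of 0] by simp
    have iX2: "integrable M (\<lambda>\<omega>. X \<omega>^2)"
      using distributed_integrable[OF D, of "\<lambda>x. x^2"] integrable_normal_moment[OF s, of 0 2] by simp
    have g: "gaussian_rv M X" unfolding gaussian_rv_def using Xm s D by blast
    show ?thesis using g iX iX2 E V s2 by simp
  next
    case False
    then have v0: "v = 0" using v by simp
    define \<nu> where "\<nu> = return borel (0::real)"
    have ps: "prob_space \<nu>" unfolding \<nu>_def by (rule prob_space_return) simp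
    have rdn: "real_distribution \<nu>"
      unfolding real_distribution_def real_distribution_axioms_def using ps by (simp add: \<nu>_def)
    have cnu: "char \<nu> t = 1" for t
      unfolding char_def \<nu>_def by (subst integral_return) auto
    have "\<mu> = \<nu>" by (rule Levy_uniqueness[OF rd rdn]) (simp add: fun_eq_iff cmu cnu v0)
    moreover have "AE x in return borel (0::real). x = 0" by (subst AE_return) auto
    ultimately have "AE x in distr M borel X. x = 0" unfolding \<mu>_def \<nu>_def by metis
    then have AE: "AE \<omega> in M. X \<omega> = 0" by (rule AE_distrD[OF Xm])
    have iX: "integrable M X" by (subst integrable_cong_AE[OF Xm _ AE]) auto
    have E: "integral\<^sup>L M X = 0" by (subst integral_cong_AE[OF Xm _ AE]) auto
    have AE2: "AE \<omega> in M. X \<omega>^2 = 0" using AE by eventually_elim simp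
    have X2m: "(\<lambda>\<omega>. X \<omega>^2) \<in> borel_measurable M" using Xm by measurable
    have iX2: "integrable M (\<lambda>\<omega>. X \<omega>^2)" by (subst integrable_cong_AE[OF X2m _ AE2]) auto
    have E2: "integral\<^sup>L M (\<lambda>\<omega>. X \<omega>^2) = 0" by (subst integral_cong_AE[OF X2m _ AE2]) auto
    have g: "gaussian_rv M X" unfolding gaussian_rv_def using Xm AE by blast
    show ?thesis using g iX E iX2 E2 v0 by simp
  qed
qed

locale bmc = prob_space P for P :: "'a measure" +
  fixes d :: nat and W :: "real \<Rightarrow> nat \<Rightarrow> 'a \<Rightarrow> real"
  assumes BM: "std_brownian P d W"
begin

lemma W_meas: "t \<ge> 0 \<Longrightarrow> k \<in> {1..d} \<Longrightarrow> W t k \<in> borel_measurable P"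
  using BM unfolding std_brownian_def by auto

lemma W_cont: "\<omega> \<in> space P \<Longrightarrow> k \<in> {1..d} \<Longrightarrow> 0 \<le> a \<Longrightarrow> continuous_on {a..b} (\<lambda>t. W t k \<omega>)"
proof -
  assume "\<omega> \<in> space P" "k \<in> {1..d}" "0 \<le> a"
  then have "continuous_on {0..} (\<lambda>t. W t k \<omega>)" using BM unfolding std_brownian_def by blast
  then show ?thesis by (rule continuous_on_subset) (use \<open>0 \<le> a\<close> in auto)
qed

lemma W_incr:
  assumes "0 \<le> ts 0" "\<And>k. k < K \<Longrightarrow> ts k < ts (Suc k)"
  shows "indep_vars (\<lambda>_. borel) (\<lambda>p \<omega>. W (ts (Suc (fst p))) (snd p) \<omega> - W (ts (fst p)) (snd p) \<omega>) ({..<K} \<times> {1..d})"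
    and "\<And>k j. k < K \<Longrightarrow> j \<in> {1..d} \<Longrightarrow> distributed P lborel (\<lambda>\<omega>. W (ts (Suc k)) j \<omega> - W (ts k) j \<omega>)
           (normal_density 0 (sqrt (ts (Suc k) - ts k)))"
  using BM assms unfolding std_brownian_def by blast+

lemma char_gridsum:
  assumes a: "0 \<le> a" and ab: "a < b" and K: "K > 0"
  shows "(CLINT \<omega>|P. iexp (t * (\<Sum>k\<in>{1..d}. \<Sum>p<K. \<alpha> k p * (W (grid a b K (Suc p)) k \<omega> - W (grid a b K p) k \<omega>))))
     = complex_of_real (exp (- (t^2 * (\<Sum>k\<in>{1..d}. \<Sum>p<K. (\<alpha> k p)^2 * ((b - a) / real K))) / 2))"
proof -
  let ?g = "grid a b K"
  let ?I = "{..<K} \<times> {1..d}"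
  define \<Delta> where "\<Delta> = (\<lambda>i \<omega>. W (?g (Suc (fst i))) (snd i) \<omega> - W (?g (fst i)) (snd i) \<omega>)"
  define \<sigma> where "\<sigma> = sqrt ((b - a) / real K)"
  have s: "\<sigma> > 0" using ab K by (simp add: \<sigma>_def)
  have gs: "?g (Suc k) - ?g k = (b - a) / real K" for k by (rule grid_Suc)
  have inc: "\<And>k. k < K \<Longrightarrow> ?g k < ?g (Suc k)" using gs ab K
    by (metis diff_gt_0_iff_gt divide_pos_pos of_nat_0_less_iff)
  have ind: "indep_vars (\<lambda>_. borel) \<Delta> ?I"
    unfolding \<Delta>_def by (rule W_incr(1)) (use a inc in auto)
  have dist: "distributed P lborel (\<Delta> i) (normal_density 0 \<sigma>)" if "i \<in> ?I" for i
    using W_incr(2)[of "?g" K "fst i" "snd i"] that a inc unfolding \<Delta>_def \<sigma>_def gs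
    by (auto simp: mem_Times_iff)
  define X where "X = (\<lambda>i \<omega>. \<alpha> (snd i) (fst i) * \<Delta> i \<omega>)"
  have indX: "indep_vars (\<lambda>_. borel) X ?I"
    unfolding X_def by (rule indep_vars_compose2[OF ind]) measurable
  have sumeq: "(\<Sum>k\<in>{1..d}. \<Sum>p<K. \<alpha> k p * (W (?g (Suc p)) k \<omega> - W (?g p) k \<omega>)) = (\<Sum>i\<in>?I. X i \<omega>)" for \<omega>
    unfolding X_def \<Delta>_def
    by (subst sum.swap) (simp add: sum.cartesian_product case_prod_beta)
  have Xm: "random_variable borel (\<lambda>\<omega>. \<Sum>i\<in>?I. X i \<omega>)"
    using indX by (intro borel_measurable_sum) (auto simp: indep_vars_def)
  have "(CLINT \<omega>|P. iexp (t * (\<Sum>k\<in>{1..d}. \<Sum>p<K. \<alpha> k p * (W (?g (Suc p)) k \<omega> - W (?g p) k \<omega>))))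
      = (CLINT \<omega>|P. iexp (t * (\<Sum>i\<in>?I. X i \<omega>)))" by (simp only: sumeq)
  also have "\<dots> = char (distr P borel (\<lambda>\<omega>. \<Sum>i\<in>?I. X i \<omega>)) t"
    unfolding char_def by (rule integral_distr[symmetric, OF Xm]) measurable
  also have "\<dots> = (\<Prod>i\<in>?I. char (distr P borel (X i)) t)"
    by (rule char_distr_sum[OF indX])
  also have "\<dots> = (\<Prod>i\<in>?I. complex_of_real (exp (- ((\<sigma> * (t * \<alpha> (snd i) (fst i)))^2) / 2)))"
  proof (rule prod.cong[OF refl])
    fix i assume i: "i \<in> ?I"
    have Dm: "random_variable borel (X i)" using indX i by (auto simp: indep_vars_def)
    have "char (distr P borel (X i)) t = (CLINT \<omega>|P. iexp (t * X i \<omega>))"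
      unfolding char_def by (rule integral_distr[OF Dm]) measurable
    also have "\<dots> = (CLINT \<omega>|P. iexp ((t * \<alpha> (snd i) (fst i)) * \<Delta> i \<omega>))"
      unfolding X_def by (simp add: mult.assoc)
    also have "\<dots> = complex_of_real (exp (- ((\<sigma> * (t * \<alpha> (snd i) (fst i)))^2) / 2))"
      by (rule normal_cf[OF dist[OF i] s])
    finally show "char (distr P borel (X i)) t = complex_of_real (exp (- ((\<sigma> * (t * \<alpha> (snd i) (fst i)))^2) / 2))" .
  qed
  also have "\<dots> = complex_of_real (exp (\<Sum>i\<in>?I. - ((\<sigma> * (t * \<alpha> (snd i) (fst i)))^2) / 2))"
    by (simp add: exp_sum of_real_prod)
  also have "(\<Sum>i\<in>?I. - ((\<sigma> * (t * \<alpha> (snd i) (fst i)))^2) / 2)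
      = - (t^2 * (\<Sum>k\<in>{1..d}. \<Sum>p<K. (\<alpha> k p)^2 * ((b - a) / real K))) / 2"
  proof -
    have s2: "\<sigma>^2 = (b - a) / real K" using ab K by (simp add: \<sigma>_def)
    have "(\<Sum>i\<in>?I. - ((\<sigma> * (t * \<alpha> (snd i) (fst i)))^2) / 2)
        = (\<Sum>i\<in>?I. - (t^2 * ((\<alpha> (snd i) (fst i))^2 * \<sigma>^2)) / 2)"
      by (simp add: power_mult_distrib mult_ac)
    also have "\<dots> = - (t^2 * (\<Sum>i\<in>?I. (\<alpha> (snd i) (fst i))^2 * \<sigma>^2)) / 2"
      by (simp add: sum_distrib_left sum_divide_distrib[symmetric] sum_negf)
    also have "(\<Sum>i\<in>?I. (\<alpha> (snd i) (fst i))^2 * \<sigma>^2) = (\<Sum>k\<in>{1..d}. \<Sum>p<K. (\<alpha> k p)^2 * \<sigma>^2)"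
      by (subst sum.swap) (simp add: sum.cartesian_product case_prod_beta)
    finally show ?thesis by (simp add: s2)
  qed
  finally show ?thesis .
qed

end

context bmc
begin

lemma grid_ge: "0 \<le> a \<Longrightarrow> a \<le> b \<Longrightarrow> 0 \<le> grid a b K p"
  unfolding grid_def by (intro add_nonneg_nonneg divide_nonneg_nonneg mult_nonneg_nonneg) auto

lemma RS_meas: "0 \<le> a \<Longrightarrow> a \<le> b \<Longrightarrow> RS W d a b F K \<in> borel_measurable P"
  unfolding RS_def
  by (intro borel_measurable_sum borel_measurable_times borel_measurable_diff borel_measurable_const
      W_meas grid_ge) auto

lemma LSI_props:
  assumes a: "0 \<le> a" and ab: "a < b" and F: "\<And>k. k \<in> {1..d} \<Longrightarrow> C1 a b (F k) (F' k)"
  shows "LSI W d a b F F' \<in> borel_measurable P"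
    and "gaussian_rv P (LSI W d a b F F')"
    and "integrable P (LSI W d a b F F')"
    and "integral\<^sup>L P (LSI W d a b F F') = 0"
    and "integrable P (\<lambda>\<omega>. (LSI W d a b F F' \<omega>)^2)"
    and "integral\<^sup>L P (\<lambda>\<omega>. (LSI W d a b F F' \<omega>)^2) = (\<Sum>k\<in>{1..d}. integral {a..b} (\<lambda>s. (F k s)^2))"
proof -
  define v where "v = (\<Sum>k\<in>{1..d}. integral {a..b} (\<lambda>s. (F k s)^2))"
  define L where "L = LSI W d a b F F'"
  have conv: "(\<lambda>K. RS W d a b F K \<omega>) \<longlonglongrightarrow> L \<omega>" if "\<omega> \<in> space P" for \<omega>
    unfolding L_def by (rule RS_conv[OF ab]) (use F W_cont[OF that _ a] in auto)
  have RSm: "RS W d a b F K \<in> borel_measurable P" for K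
    using a ab by (intro RS_meas) auto
  have Lm: "L \<in> borel_measurable P"
    by (rule borel_measurable_LIMSEQ_real[OF conv RSm])
  have Fc: "continuous_on {a..b} (F k)" if "k \<in> {1..d}" for k using C1_cont[OF F[OF that]] .
  have v0: "v \<ge> 0" unfolding v_def
    by (intro sum_nonneg integral_nonneg integrable_continuous_real continuous_intros Fc) auto
  define vK where "vK = (\<lambda>K. \<Sum>k\<in>{1..d}. \<Sum>p<K. (F k (grid a b K p))^2 * ((b - a) / real K))"
  have vK: "vK \<longlonglongrightarrow> v"
  proof -
    have "(\<lambda>K. \<Sum>k\<in>{1..d}. \<Sum>p<K. integral {grid a b K p..grid a b K (Suc p)} (\<lambda>_. 1) * (F k (grid a b K p))^2)
        \<longlonglongrightarrow> (\<Sum>k\<in>{1..d}. integral {a..b} (\<lambda>s. 1 * (F k s)^2))"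
      apply (intro tendsto_sum)
      apply (rule riemann_conv[OF ab])
      using Fc ab by (auto intro!: continuous_intros grid_mono)
    moreover have "(\<Sum>p<K. integral {grid a b K p..grid a b K (Suc p)} (\<lambda>_. 1) * (F k (grid a b K p))^2)
        = (\<Sum>p<K. (F k (grid a b K p))^2 * ((b - a) / real K))" for k K
    proof (rule sum.cong[OF refl])
      fix p
      have le: "grid a b K p \<le> grid a b K (Suc p)" using grid_mono[of a b p "Suc p" K] ab by auto
      show "integral {grid a b K p..grid a b K (Suc p)} (\<lambda>_. 1) * (F k (grid a b K p))^2
          = (F k (grid a b K p))^2 * ((b - a) / real K)"
        using le grid_Suc[of a b K p] by simp
    qed
    ultimately show ?thesis unfolding vK_def v_def by simp
  qed
  have cfK: "(CLINT \<omega>|P. iexp (t * RS W d a b F K \<omega>)) = complex_of_real (exp (- (t^2 * vK K) / 2))"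
    if K: "K > 0" for t K
    unfolding RS_def vK_def by (rule char_gridsum[OF a ab K])
  have cf: "(CLINT \<omega>|P. iexp (t * L \<omega>)) = complex_of_real (exp (- (t^2 * v) / 2))" for t
  proof (rule LIMSEQ_unique)
    show "(\<lambda>K. CLINT \<omega>|P. iexp (t * RS W d a b F K \<omega>)) \<longlonglongrightarrow> (CLINT \<omega>|P. iexp (t * L \<omega>))"
    proof (rule integral_dominated_convergence[where w="\<lambda>_. 1"])
      show "(\<lambda>\<omega>. iexp (t * L \<omega>)) \<in> borel_measurable P" using Lm by measurable
      show "(\<lambda>\<omega>. iexp (t * RS W d a b F K \<omega>)) \<in> borel_measurable P" for K using RSm[of K] by measurable
      show "integrable P (\<lambda>_. 1::real)" by simp
      show "AE \<omega> in P. (\<lambda>K. iexp (t * RS W d a b F K \<omega>)) \<longlonglongrightarrow> iexp (t * L \<omega>)"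
        by (intro AE_I2 isCont_tendsto_compose[OF isCont_iexp] tendsto_mult_left conv)
      show "AE \<omega> in P. norm (iexp (t * RS W d a b F K \<omega>)) \<le> 1" for K
        by (intro AE_I2) (simp add: norm_exp_i_times)
    qed
    have "(\<lambda>K. complex_of_real (exp (- (t^2 * vK K) / 2))) \<longlonglongrightarrow> complex_of_real (exp (- (t^2 * v) / 2))"
      by (intro tendsto_intros vK) simp
    moreover have "\<forall>\<^sub>F K in sequentially. complex_of_real (exp (- (t^2 * vK K) / 2)) = (CLINT \<omega>|P. iexp (t * RS W d a b F K \<omega>))"
      unfolding eventually_sequentially
    proof (intro exI[of _ 1] allI impI)
      fix K :: nat assume "1 \<le> K"
      then show "complex_of_real (exp (- (t^2 * vK K) / 2)) = (CLINT \<omega>|P. iexp (t * RS W d a b F K \<omega>))"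
        using cfK[of K t] by simp
    qed
    ultimately show "(\<lambda>K. CLINT \<omega>|P. iexp (t * RS W d a b F K \<omega>)) \<longlonglongrightarrow> complex_of_real (exp (- (t^2 * v) / 2))"
      by (rule Lim_transform_eventually)
  qed
  note G = gauss_from_char[OF Lm v0 cf]
  show "LSI W d a b F F' \<in> borel_measurable P" using Lm L_def by simp
  show "gaussian_rv P (LSI W d a b F F')"
    and "integrable P (LSI W d a b F F')"
    and "integral\<^sup>L P (LSI W d a b F F') = 0"
    and "integrable P (\<lambda>\<omega>. (LSI W d a b F F' \<omega>)^2)"
    and "integral\<^sup>L P (\<lambda>\<omega>. (LSI W d a b F F' \<omega>)^2) = (\<Sum>k\<in>{1..d}. integral {a..b} (\<lambda>s. (F k s)^2))"
    using G unfolding L_def v_def by auto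
qed

end

lemma C1_add: "C1 a b f f' \<Longrightarrow> C1 a b g g' \<Longrightarrow> C1 a b (\<lambda>s. f s + g s) (\<lambda>s. f' s + g' s)"
  unfolding C1_def by (auto intro!: DERIV_add continuous_intros)

lemma C1_diff: "C1 a b f f' \<Longrightarrow> C1 a b g g' \<Longrightarrow> C1 a b (\<lambda>s. f s - g s) (\<lambda>s. f' s - g' s)"
  unfolding C1_def by (auto intro!: DERIV_diff continuous_intros)

lemma C1_sum: "finite J \<Longrightarrow> (\<And>j. j \<in> J \<Longrightarrow> C1 a b (f j) (f' j)) \<Longrightarrow>
   C1 a b (\<lambda>s. \<Sum>j\<in>J. c j * f j s) (\<lambda>s. \<Sum>j\<in>J. c j * f' j s)"
  unfolding C1_def by (auto intro!: DERIV_sum DERIV_cmult continuous_intros)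

lemma C1_const: "C1 a b (\<lambda>_. c) (\<lambda>_. 0)"
  unfolding C1_def by auto

context bmc
begin

lemma LSI_add:
  assumes a: "0 \<le> a" and F: "\<And>k. k \<in> {1..d} \<Longrightarrow> C1 a b (F k) (F' k)" and G: "\<And>k. k \<in> {1..d} \<Longrightarrow> C1 a b (G k) (G' k)"
    and \<omega>: "\<omega> \<in> space P"
  shows "LSI W d a b (\<lambda>k s. F k s + G k s) (\<lambda>k s. F' k s + G' k s) \<omega> = LSI W d a b F F' \<omega> + LSI W d a b G G' \<omega>"
    and "LSI W d a b (\<lambda>k s. F k s - G k s) (\<lambda>k s. F' k s - G' k s) \<omega> = LSI W d a b F F' \<omega> - LSI W d a b G G' \<omega>"
proof -
  define H where "H = (\<lambda>j::nat. if j = 0 then F else G)"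
  define H' where "H' = (\<lambda>j::nat. if j = 0 then F' else G')"
  have c: "\<And>j k. j \<in> {0,1} \<Longrightarrow> k \<in> {1..d} \<Longrightarrow> continuous_on {a..b} (H' j k)"
    using F G unfolding H'_def C1_def by auto
  note l = LSI_lin[of "{0::nat,1}" d a b H' W \<omega>, OF _ c W_cont[OF \<omega> _ a]]
  show "LSI W d a b (\<lambda>k s. F k s + G k s) (\<lambda>k s. F' k s + G' k s) \<omega> = LSI W d a b F F' \<omega> + LSI W d a b G G' \<omega>"
    using l[of "\<lambda>_. 1" H] by (simp add: H_def H'_def)
  show "LSI W d a b (\<lambda>k s. F k s - G k s) (\<lambda>k s. F' k s - G' k s) \<omega> = LSI W d a b F F' \<omega> - LSI W d a b G G' \<omega>"
    using l[of "\<lambda>j. if j = 0 then 1 else -1" H] by (simp add: H_def H'_def)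
qed

lemma LSI_cov:
  assumes a: "0 \<le> a" and ab: "a < b" and F: "\<And>k. k \<in> {1..d} \<Longrightarrow> C1 a b (F k) (F' k)"
    and G: "\<And>k. k \<in> {1..d} \<Longrightarrow> C1 a b (G k) (G' k)"
  shows "integral\<^sup>L P (\<lambda>\<omega>. LSI W d a b F F' \<omega> * LSI W d a b G G' \<omega>) = (\<Sum>k\<in>{1..d}. integral {a..b} (\<lambda>s. F k s * G k s))"
proof -
  let ?Lp = "LSI W d a b (\<lambda>k s. F k s + G k s) (\<lambda>k s. F' k s + G' k s)"
  let ?Lm = "LSI W d a b (\<lambda>k s. F k s - G k s) (\<lambda>k s. F' k s - G' k s)"
  have Cp: "C1 a b (\<lambda>s. F k s + G k s) (\<lambda>s. F' k s + G' k s)" if "k \<in> {1..d}" for k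
    using F[OF that] G[OF that] by (rule C1_add)
  have Cm: "C1 a b (\<lambda>s. F k s - G k s) (\<lambda>s. F' k s - G' k s)" if "k \<in> {1..d}" for k
    using F[OF that] G[OF that] by (rule C1_diff)
  have Pp5: "integrable P (\<lambda>\<omega>. (?Lp \<omega>)^2)" by (rule LSI_props(5)[OF a ab Cp])
  have Pm5: "integrable P (\<lambda>\<omega>. (?Lm \<omega>)^2)" by (rule LSI_props(5)[OF a ab Cm])
  have Pp6: "integral\<^sup>L P (\<lambda>\<omega>. (?Lp \<omega>)^2) = (\<Sum>k\<in>{1..d}. integral {a..b} (\<lambda>s. (F k s + G k s)^2))"
    by (rule LSI_props(6)[OF a ab Cp])
  have Pm6: "integral\<^sup>L P (\<lambda>\<omega>. (?Lm \<omega>)^2) = (\<Sum>k\<in>{1..d}. integral {a..b} (\<lambda>s. (F k s - G k s)^2))"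
    by (rule LSI_props(6)[OF a ab Cm])
  have "integral\<^sup>L P (\<lambda>\<omega>. LSI W d a b F F' \<omega> * LSI W d a b G G' \<omega>) = integral\<^sup>L P (\<lambda>\<omega>. ((?Lp \<omega>)^2 - (?Lm \<omega>)^2) / 4)"
  proof (rule Bochner_Integration.integral_cong[OF refl])
    fix \<omega> assume \<omega>: "\<omega> \<in> space P"
    show "LSI W d a b F F' \<omega> * LSI W d a b G G' \<omega> = ((?Lp \<omega>)^2 - (?Lm \<omega>)^2) / 4"
    proof -
      have e1: "?Lp \<omega> = LSI W d a b F F' \<omega> + LSI W d a b G G' \<omega>"
        by (rule LSI_add(1)[OF a F G \<omega>])
      have e2: "?Lm \<omega> = LSI W d a b F F' \<omega> - LSI W d a b G G' \<omega>"
        by (rule LSI_add(2)[OF a F G \<omega>])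
      show ?thesis unfolding e1 e2 by (simp add: power2_eq_square algebra_simps)
    qed
  qed
  also have "\<dots> = (integral\<^sup>L P (\<lambda>\<omega>. (?Lp \<omega>)^2) - integral\<^sup>L P (\<lambda>\<omega>. (?Lm \<omega>)^2)) / 4"
    using Pp5 Pm5 by simp
  also have "\<dots> = (\<Sum>k\<in>{1..d}. (integral {a..b} (\<lambda>s. (F k s + G k s)^2) - integral {a..b} (\<lambda>s. (F k s - G k s)^2)) / 4)"
    unfolding Pp6 Pm6 by (simp only: sum_subtractf[symmetric] sum_divide_distrib[symmetric])
  also have "\<dots> = (\<Sum>k\<in>{1..d}. integral {a..b} (\<lambda>s. F k s * G k s))"
  proof (rule sum.cong[OF refl])
    fix k assume k: "k \<in> {1..d}"
    have cF: "continuous_on {a..b} (F k)" and cG: "continuous_on {a..b} (G k)"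
      using C1_cont[OF F[OF k]] C1_cont[OF G[OF k]] by auto
    have "integral {a..b} (\<lambda>s. (F k s + G k s)^2) - integral {a..b} (\<lambda>s. (F k s - G k s)^2)
        = integral {a..b} (\<lambda>s. (F k s + G k s)^2 - (F k s - G k s)^2)"
      by (rule integral_diff[symmetric]) (intro integrable_continuous_real continuous_intros cF cG)+
    also have "\<dots> = integral {a..b} (\<lambda>s. 4 * (F k s * G k s))"
      by (rule integral_cong) (simp add: power2_eq_square algebra_simps)
    also have "\<dots> = 4 * integral {a..b} (\<lambda>s. F k s * G k s)" by simp
    finally show "(integral {a..b} (\<lambda>s. (F k s + G k s)^2) - integral {a..b} (\<lambda>s. (F k s - G k s)^2)) / 4
        = integral {a..b} (\<lambda>s. F k s * G k s)" by simp
  qed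
  finally show ?thesis .
qed

end

lemma strict_mono_pow2: "strict_mono (\<lambda>k::nat. (2::nat)^k)"
  unfolding strict_mono_def by simp

lemma grid_tg:
  fixes T :: real and M K m p :: nat
  assumes "M > 0" "K > 0"
  shows "grid (real m * T / real M) (real (Suc m) * T / real M) K p = real (K * m + p) * T / (real M * real K)"
  using assms unfolding grid_def by (simp add: field_simps)

context bmc
begin

lemma indep_LSI:
  fixes T :: real and M :: nat and J :: "nat set"
    and FF FF' :: "nat \<Rightarrow> nat \<Rightarrow> nat \<Rightarrow> real \<Rightarrow> real"
  assumes T: "T > 0" and M: "M \<ge> 1"
    and C: "\<And>n j k. n \<in> {1..M} \<Longrightarrow> j \<in> J \<Longrightarrow> k \<in> {1..d} \<Longrightarrow>
             C1 (real (n - 1) * T / real M) (real n * T / real M) (FF n j k) (FF' n j k)"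
  shows "indep_vars (\<lambda>_. Pi\<^sub>M J (\<lambda>_. borel))
     (\<lambda>n \<omega>. \<lambda>j\<in>J. LSI W d (real (n - 1) * T / real M) (real n * T / real M) (FF n j) (FF' n j) \<omega>) {1..M}"
proof -
  define tg where "tg = (\<lambda>n::nat. real n * T / real M)"
  define u where "u = (\<lambda>K::nat. \<lambda>q::nat. real q * T / (real M * real K))"
  define \<Delta> where "\<Delta> = (\<lambda>K i \<omega>. W (u K (Suc (fst i))) (snd i) \<omega> - W (u K (fst i)) (snd i) \<omega>)"
  define B where "B = (\<lambda>(K::nat) (n::nat). {K * (n - 1)..<K * n} \<times> {1..d})"
  define V where "V = (\<lambda>(K::nat) (n::nat) \<omega>. restrict (\<lambda>i. \<Delta> K i \<omega>) (B K n))"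
  define H where "H = (\<lambda>(K::nat) (n::nat). {V K n -` A \<inter> space P | A. A \<in> sets (Pi\<^sub>M (B K n) (\<lambda>_. borel))})"
  define E where "E = (\<lambda>n::nat. \<Union>k::nat. H (2^k) n)"
  have M0: "M > 0" using M by simp
  have u0: "u K q \<ge> 0" for K q using T unfolding u_def by simp
  have Vm: "V K n \<in> measurable P (Pi\<^sub>M (B K n) (\<lambda>_. borel))" for K n
    unfolding V_def \<Delta>_def
    by (intro measurable_restrict borel_measurable_diff W_meas u0) (auto simp: B_def)
  have indH: "indep_sets (H K) {1..M}" if K: "K > 0" for K
  proof -
    have inc: "u K q < u K (Suc q)" for q using T M0 K unfolding u_def by (simp add: field_simps)
    have ind: "indep_vars (\<lambda>_. borel) (\<Delta> K) ({..<M * K} \<times> {1..d})"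
      unfolding \<Delta>_def by (rule W_incr(1)) (use inc in \<open>auto simp: u_def\<close>)
    have sub: "B K n \<subseteq> {..<M * K} \<times> {1..d}" if "n \<in> {1..M}" for n
    proof -
      have "K * n \<le> M * K" using that by (simp add: mult.commute)
      then show ?thesis unfolding B_def by (auto intro: less_le_trans)
    qed
    have disj: "disjoint_family_on (B K) {1..M}"
      unfolding disjoint_family_on_def
    proof (intro ballI impI)
      fix m n assume mn: "m \<in> {1..M}" "n \<in> {1..M}" "m \<noteq> n"
      show "B K m \<inter> B K n = {}"
      proof (rule ccontr)
        assume "B K m \<inter> B K n \<noteq> {}"
        then obtain q where q: "K * (m - 1) \<le> q" "q < K * m" "K * (n - 1) \<le> q" "q < K * n"
          unfolding B_def by auto
        have "K * (m - 1) < K * n" "K * (n - 1) < K * m" using q by linarith+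
        then have "m - 1 < n" "n - 1 < m" using K by auto
        then show False using mn by auto
      qed
    qed
    have "indep_vars (\<lambda>n. Pi\<^sub>M (B K n) (\<lambda>_. borel)) (\<lambda>n \<omega>. restrict (\<lambda>i. \<Delta> K i \<omega>) (B K n)) {1..M}"
      by (rule indep_vars_restrict[OF ind sub disj])
    then show ?thesis unfolding indep_vars_def2 H_def V_def by blast
  qed
  have Hmono: "H K n \<subseteq> H (2 * K) n" if n: "n \<in> {1..M}" for K n
  proof
    fix X assume "X \<in> H K n"
    then obtain A where A: "A \<in> sets (Pi\<^sub>M (B K n) (\<lambda>_. borel))" "X = V K n -` A \<inter> space P"
      unfolding H_def by auto
    define \<phi> where "\<phi> = (\<lambda>x::nat \<times> nat \<Rightarrow> real. \<lambda>i\<in>B K n. x (2 * fst i, snd i) + x (Suc (2 * fst i), snd i))"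
    have memB: "(2 * fst i, snd i) \<in> B (2 * K) n" "(Suc (2 * fst i), snd i) \<in> B (2 * K) n" if "i \<in> B K n" for i
      using that unfolding B_def by (auto simp: mem_Times_iff)
    have \<phi>m: "\<phi> \<in> measurable (Pi\<^sub>M (B (2 * K) n) (\<lambda>_. borel)) (Pi\<^sub>M (B K n) (\<lambda>_. borel))"
      unfolding \<phi>_def
      by (intro measurable_restrict borel_measurable_add measurable_component_singleton memB)
    have eq: "V K n \<omega> = \<phi> (V (2 * K) n \<omega>)" for \<omega>
    proof -
      have u2: "u (2 * K) (2 * q) = u K q" for q unfolding u_def using M0 by (cases "K = 0") (simp_all add: field_simps)
      have u2': "u (2 * K) (Suc (Suc (2 * q))) = u K (Suc q)" for q
        unfolding u_def using M0 by (cases "K = 0") (simp_all add: field_simps)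
      show ?thesis unfolding V_def \<phi>_def
        by (rule ext) (auto simp: memB \<Delta>_def u2 u2'[simplified] mult_2_right[symmetric] simp del: mult_Suc_right)
    qed
    have "X = V (2 * K) n -` (\<phi> -` A \<inter> space (Pi\<^sub>M (B (2 * K) n) (\<lambda>_. borel))) \<inter> space P"
      using A(2) measurable_space[OF Vm[of "2 * K" n]] by (auto simp: eq)
    moreover have "\<phi> -` A \<inter> space (Pi\<^sub>M (B (2 * K) n) (\<lambda>_. borel)) \<in> sets (Pi\<^sub>M (B (2 * K) n) (\<lambda>_. borel))"
      by (rule measurable_sets[OF \<phi>m A(1)])
    ultimately show "X \<in> H (2 * K) n" unfolding H_def by blast
  qed
  have Hmono': "H (2^i) n \<subseteq> H (2^j) n" if "i \<le> j" "n \<in> {1..M}" for i j n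
    using lift_Suc_mono_le[of "\<lambda>k. H (2^k) n", OF _ that(1)] Hmono[OF that(2)] by simp
  have Hev: "H K n \<subseteq> events" for K n
    unfolding H_def using Vm by (auto intro: measurable_sets)
  have Eev: "E n \<subseteq> events" for n unfolding E_def using Hev by auto
  have Hstable: "A \<inter> A' \<in> H K n" if hA: "A \<in> H K n" and hA': "A' \<in> H K n" for A A' K n
  proof -
    obtain X where "X \<in> sets (Pi\<^sub>M (B K n) (\<lambda>_. borel))" "A = V K n -` X \<inter> space P"
      using hA unfolding H_def by auto
    moreover obtain X' where "X' \<in> sets (Pi\<^sub>M (B K n) (\<lambda>_. borel))" "A' = V K n -` X' \<inter> space P"
      using hA' unfolding H_def by auto
    ultimately show ?thesis unfolding H_def by (intro CollectI exI[of _ "X \<inter> X'"]) auto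
  qed
  have Estable: "Int_stable (E n)" if n: "n \<in> {1..M}" for n
  proof (rule Int_stableI)
    fix A A' assume "A \<in> E n" "A' \<in> E n"
    then obtain i i' where "A \<in> H (2^i) n" "A' \<in> H (2^i') n" unfolding E_def by auto
    then have "A \<in> H (2^max i i') n" "A' \<in> H (2^max i i') n" using Hmono'[OF _ n] by (meson max.cobounded1 max.cobounded2 subsetD)+
    then show "A \<inter> A' \<in> E n" unfolding E_def using Hstable by blast
  qed
  have indE: "indep_sets E {1..M}"
  proof (rule indep_setsI)
    show "E n \<subseteq> events" for n by (rule Eev)
    fix A and L :: "nat set" assume L: "L \<noteq> {}" "L \<subseteq> {1..M}" "finite L" and A: "\<forall>j\<in>L. A j \<in> E j"
    then have "\<forall>j\<in>L. \<exists>k. A j \<in> H (2^k) j" unfolding E_def by auto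
    then obtain kk where kk: "\<And>j. j \<in> L \<Longrightarrow> A j \<in> H (2^kk j) j" by metis
    define km where "km = Max (kk ` L)"
    have "A j \<in> H (2^km) j" if jL: "j \<in> L" for j
    proof -
      have "kk j \<le> km" unfolding km_def using L(3) jL by simp
      moreover have "j \<in> {1..M}" using jL L(2) by auto
      ultimately show ?thesis using Hmono'[of "kk j" km j] kk[OF jL] by auto
    qed
    then show "prob (\<Inter>j\<in>L. A j) = (\<Prod>j\<in>L. prob (A j))"
      by (intro indep_setsD[OF indH[of "2^km"] L(2,1,3)]) auto
  qed
  have indS: "indep_sets (\<lambda>n. sigma_sets (space P) (E n)) {1..M}"
    by (rule indep_sets_sigma[OF indE Estable])
  have Lm: "LSI W d (tg (n - 1)) (tg n) (FF n j) (FF' n j) \<in> borel_measurable (sigma (space P) (E n))"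
    if n: "n \<in> {1..M}" and j: "j \<in> J" for n j
  proof -
    obtain m where nm: "n = Suc m" using n by (cases n) auto
    have EP: "E n \<subseteq> Pow (space P)" using Eev sets.sets_into_space by blast
    have sp: "space (sigma (space P) (E n)) = space P" using EP by simp
    have ss: "sets (sigma (space P) (E n)) = sigma_sets (space P) (E n)" using EP by simp
    have a0: "0 \<le> tg m" and ab: "tg m < tg (Suc m)" using T M0 unfolding tg_def by (auto simp: field_simps)
    have RSm: "RS W d (tg m) (tg (Suc m)) (FF n j) K \<in> borel_measurable (sigma (space P) (E n))"
      if K: "K = 2^k" for K k
    proof -
      have K0: "K > 0" using K by simp
      define \<psi> where "\<psi> = (\<lambda>x::nat \<times> nat \<Rightarrow> real. \<Sum>k'\<in>{1..d}. \<Sum>p<K. FF n j k' (grid (tg m) (tg (Suc m)) K p) * x (K * m + p, k'))"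
      have memB: "(K * m + p, k') \<in> B K n" if "p < K" "k' \<in> {1..d}" for p k'
        using that unfolding B_def nm by auto
      have \<psi>m: "\<psi> \<in> borel_measurable (Pi\<^sub>M (B K n) (\<lambda>_. borel))"
        unfolding \<psi>_def
        by (intro borel_measurable_sum borel_measurable_times borel_measurable_const measurable_component_singleton memB; simp)
      have gr: "grid (tg m) (tg (Suc m)) K p = u K (K * m + p)" for p
        unfolding tg_def u_def by (rule grid_tg[OF M0 K0])
      have eq: "RS W d (tg m) (tg (Suc m)) (FF n j) K \<omega> = \<psi> (V K n \<omega>)" for \<omega>
        unfolding RS_def \<psi>_def V_def
      proof (intro sum.cong refl)
        fix k' p assume k': "k' \<in> {1..d}" and p: "p \<in> {..<K}"
        have "grid (tg m) (tg (Suc m)) K (Suc p) = u K (Suc (K * m + p))" using gr[of "Suc p"] by simp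
        then show "FF n j k' (grid (tg m) (tg (Suc m)) K p) * (W (grid (tg m) (tg (Suc m)) K (Suc p)) k' \<omega> - W (grid (tg m) (tg (Suc m)) K p) k' \<omega>) =
          FF n j k' (grid (tg m) (tg (Suc m)) K p) * restrict (\<lambda>i. \<Delta> K i \<omega>) (B K n) (K * m + p, k')"
          using memB[of p k'] k' p by (simp add: \<Delta>_def gr)
      qed
      have eqf: "RS W d (tg m) (tg (Suc m)) (FF n j) K = (\<lambda>\<omega>. \<psi> (V K n \<omega>))" by (rule ext) (rule eq)
      show ?thesis unfolding measurable_def sp ss
      proof (intro CollectI conjI ballI)
        show "RS W d (tg m) (tg (Suc m)) (FF n j) K \<in> space P \<rightarrow> space borel" by simp
        fix X :: "real set" assume X: "X \<in> sets borel"
        have "RS W d (tg m) (tg (Suc m)) (FF n j) K -` X \<inter> space P = V K n -` (\<psi> -` X \<inter> space (Pi\<^sub>M (B K n) (\<lambda>_. borel))) \<inter> space P"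
          unfolding eqf using measurable_space[OF Vm[of K n]] by auto
        moreover have "\<psi> -` X \<inter> space (Pi\<^sub>M (B K n) (\<lambda>_. borel)) \<in> sets (Pi\<^sub>M (B K n) (\<lambda>_. borel))"
          using measurable_sets[OF \<psi>m X] .
        ultimately have "RS W d (tg m) (tg (Suc m)) (FF n j) K -` X \<inter> space P \<in> H K n" unfolding H_def by blast
        then have "RS W d (tg m) (tg (Suc m)) (FF n j) K -` X \<inter> space P \<in> E n" unfolding E_def K by blast
        then show "RS W d (tg m) (tg (Suc m)) (FF n j) K -` X \<inter> space P \<in> sigma_sets (space P) (E n)" by blast
      qed
    qed
    have Cm: "\<And>k. k \<in> {1..d} \<Longrightarrow> C1 (tg m) (tg (Suc m)) (FF n j k) (FF' n j k)"
      using C[OF n j] unfolding tg_def nm by simp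
    have conv: "(\<lambda>k. RS W d (tg m) (tg (Suc m)) (FF n j) (2^k) \<omega>) \<longlonglongrightarrow> LSI W d (tg m) (tg (Suc m)) (FF n j) (FF' n j) \<omega>"
      if \<omega>: "\<omega> \<in> space (sigma (space P) (E n))" for \<omega>
    proof -
      have \<omega>': "\<omega> \<in> space P" using \<omega> sp by simp
      have "(\<lambda>K. RS W d (tg m) (tg (Suc m)) (FF n j) K \<omega>) \<longlonglongrightarrow> LSI W d (tg m) (tg (Suc m)) (FF n j) (FF' n j) \<omega>"
        by (rule RS_conv[OF ab]) (use Cm W_cont[OF \<omega>' _ a0] in auto)
      from LIMSEQ_subseq_LIMSEQ[OF this strict_mono_pow2] show ?thesis by (simp add: comp_def)
    qed
    have "LSI W d (tg m) (tg (Suc m)) (FF n j) (FF' n j) \<in> borel_measurable (sigma (space P) (E n))"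
      by (rule borel_measurable_LIMSEQ_real[OF conv RSm]) auto
    then show ?thesis using nm by simp
  qed
  show ?thesis unfolding indep_vars_def2
  proof (intro conjI ballI)
    fix n assume n: "n \<in> {1..M}"
    have a0: "0 \<le> tg (n - 1)" and ab: "tg (n - 1) < tg n" using T M0 n unfolding tg_def by (auto simp: field_simps)
    show "random_variable (Pi\<^sub>M J (\<lambda>_. borel)) (\<lambda>\<omega>. \<lambda>j\<in>J. LSI W d (real (n - 1) * T / real M) (real n * T / real M) (FF n j) (FF' n j) \<omega>)"
      by (intro measurable_restrict LSI_props(1)[OF a0 ab, unfolded tg_def] C n) auto
  next
    show "indep_sets (\<lambda>n. {(\<lambda>\<omega>. \<lambda>j\<in>J. LSI W d (real (n - 1) * T / real M) (real n * T / real M) (FF n j) (FF' n j) \<omega>) -` A \<inter> space P |A.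
          A \<in> sets (Pi\<^sub>M J (\<lambda>_. borel))}) {1..M}"
    proof (rule indep_sets_mono_sets[OF indS])
      fix n assume n: "n \<in> {1..M}"
      have EP: "E n \<subseteq> Pow (space P)" using Eev sets.sets_into_space by blast
      have vm: "(\<lambda>\<omega>. \<lambda>j\<in>J. LSI W d (tg (n - 1)) (tg n) (FF n j) (FF' n j) \<omega>) \<in> measurable (sigma (space P) (E n)) (Pi\<^sub>M J (\<lambda>_. borel))"
        by (intro measurable_restrict Lm n)
      show "{(\<lambda>\<omega>. \<lambda>j\<in>J. LSI W d (real (n - 1) * T / real M) (real n * T / real M) (FF n j) (FF' n j) \<omega>) -` A \<inter> space P |A.
          A \<in> sets (Pi\<^sub>M J (\<lambda>_. borel))} \<subseteq> sigma_sets (space P) (E n)"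
        using measurable_sets[OF vm] EP unfolding tg_def by auto
    qed
  qed
qed

end

lemma g_deriv:
  fixes Tm \<kappa> s :: real
  assumes Tm: "0 < Tm" and s: "s < Tm"
  shows "((\<lambda>s. (Tm / (Tm - s)) powr \<kappa>) has_real_derivative (\<kappa> * (Tm / (Tm - s)) powr \<kappa> / (Tm - s))) (at s)"
proof -
  have pos: "Tm / (Tm - s) > 0" using Tm s by simp
  have d: "((\<lambda>s. Tm / (Tm - s)) has_real_derivative (Tm / (Tm - s)^2)) (at s)"
    using s by (auto intro!: derivative_eq_intros simp: power2_eq_square field_simps)
  have "((\<lambda>s. (Tm / (Tm - s)) powr \<kappa>) has_real_derivative (\<kappa> * (Tm / (Tm - s)) powr (\<kappa> - 1) * (Tm / (Tm - s)^2))) (at s)"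
    by (rule DERIV_chain2[OF has_real_derivative_powr[OF pos] d])
  moreover have "\<kappa> * (Tm / (Tm - s)) powr (\<kappa> - 1) * (Tm / (Tm - s)^2) = \<kappa> * (Tm / (Tm - s)) powr \<kappa> / (Tm - s)"
  proof -
    have e1: "(Tm / (Tm - s)) powr (\<kappa> - 1) = (Tm / (Tm - s)) powr \<kappa> / (Tm / (Tm - s))"
      using pos Tm s by (simp add: powr_diff abs_of_pos)
    have e2: "Tm / (Tm - s)^2 = (Tm / (Tm - s)) / (Tm - s)" by (simp add: power2_eq_square)
    have ab: "\<And>G q x::real. q > 0 \<Longrightarrow> \<kappa> * (G / q) * (q / x) = \<kappa> * G / x" by simp
    show ?thesis unfolding e1 e2 by (rule ab[OF pos])
  qed
  ultimately show ?thesis by simp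
qed

lemma g_C1:
  fixes Tm \<kappa> a b :: real
  assumes Tm: "0 < Tm" and b: "b < Tm"
  shows "C1 a b (\<lambda>s. (Tm / (Tm - s)) powr \<kappa>) (\<lambda>s. \<kappa> * (Tm / (Tm - s)) powr \<kappa> / (Tm - s))"
  unfolding C1_def
proof (intro conjI ballI)
  fix x assume "x \<in> {a..b}"
  then have "x < Tm" using b by auto
  then show "((\<lambda>s. (Tm / (Tm - s)) powr \<kappa>) has_real_derivative \<kappa> * (Tm / (Tm - x)) powr \<kappa> / (Tm - x)) (at x within {a..b})"
    by (rule has_field_derivative_at_within[OF g_deriv[OF Tm]])
next
  show "continuous_on {a..b} (\<lambda>s. \<kappa> * (Tm / (Tm - s)) powr \<kappa> / (Tm - s))"
  proof (rule continuous_at_imp_continuous_on, rule ballI)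
    fix x assume "x \<in> {a..b}"
    then have xT: "x < Tm" using b by auto
    have c1: "isCont (\<lambda>s. (Tm / (Tm - s)) powr \<kappa>) x" by (rule DERIV_isCont[OF g_deriv[OF Tm xT]])
    have c2: "isCont (\<lambda>s. Tm - s) x" by simp
    show "isCont (\<lambda>s. \<kappa> * (Tm / (Tm - s)) powr \<kappa> / (Tm - s)) x"
      using xT by (intro continuous_divide continuous_mult continuous_const c1 c2) auto
  qed
qed

lemma g_integral:
  fixes Tm \<kappa> a b :: real
  assumes Tm: "0 < Tm" and ab: "a \<le> b" and b: "b < Tm"
  shows "integral {a..b} (\<lambda>s. (Tm / (Tm - s)) powr \<kappa>) =
    (if \<kappa> \<noteq> 1 then Tm powr \<kappa> / (\<kappa> - 1) * ((Tm - b) powr (1 - \<kappa>) - (Tm - a) powr (1 - \<kappa>))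
     else Tm * ln ((Tm - a) / (Tm - b)))"
proof (cases "\<kappa> = 1")
  case True
  have "((\<lambda>s. (Tm / (Tm - s)) powr \<kappa>) has_integral ((- Tm * ln (Tm - b)) - (- Tm * ln (Tm - a)))) {a..b}"
  proof (rule fundamental_theorem_of_calculus[OF ab])
    fix x assume x: "x \<in> {a..b}"
    then have xT: "x < Tm" using b by auto
    have "((\<lambda>s. - Tm * ln (Tm - s)) has_real_derivative (Tm / (Tm - x))) (at x)"
      using xT by (auto intro!: derivative_eq_intros simp: field_simps)
    moreover have "Tm / (Tm - x) = (Tm / (Tm - x)) powr \<kappa>" using True Tm xT by simp
    ultimately show "((\<lambda>s. - Tm * ln (Tm - s)) has_vector_derivative (Tm / (Tm - x)) powr \<kappa>) (at x within {a..b})"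
      by (simp add: has_real_derivative_iff_has_vector_derivative[symmetric] has_field_derivative_at_within)
  qed
  moreover have "(- Tm * ln (Tm - b)) - (- Tm * ln (Tm - a)) = Tm * ln ((Tm - a) / (Tm - b))"
    using ab b by (simp add: ln_div algebra_simps)
  ultimately show ?thesis using True by (simp add: integral_unique)
next
  case False
  have "((\<lambda>s. (Tm / (Tm - s)) powr \<kappa>) has_integral
     (Tm powr \<kappa> / (\<kappa> - 1) * (Tm - b) powr (1 - \<kappa>) - Tm powr \<kappa> / (\<kappa> - 1) * (Tm - a) powr (1 - \<kappa>))) {a..b}"
  proof (rule fundamental_theorem_of_calculus[OF ab])
    fix x assume x: "x \<in> {a..b}"
    then have xT: "x < Tm" using b by auto
    have "((\<lambda>s. Tm powr \<kappa> / (\<kappa> - 1) * (Tm - s) powr (1 - \<kappa>)) has_real_derivative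
        (Tm powr \<kappa> / (\<kappa> - 1) * ((1 - \<kappa>) * (Tm - x) powr (1 - \<kappa> - 1) * (-1)))) (at x)"
      using xT False by (auto intro!: derivative_eq_intros)
    moreover have "Tm powr \<kappa> / (\<kappa> - 1) * ((1 - \<kappa>) * (Tm - x) powr (1 - \<kappa> - 1) * (-1)) = (Tm / (Tm - x)) powr \<kappa>"
    proof -
      have k: "\<kappa> - 1 \<noteq> 0" using False by simp
      have e1: "(Tm - x) powr (1 - \<kappa> - 1) = inverse ((Tm - x) powr \<kappa>)" by (simp add: powr_minus)
      have e2: "(Tm / (Tm - x)) powr \<kappa> = Tm powr \<kappa> / (Tm - x) powr \<kappa>"
        using Tm xT by (simp add: powr_divide)
      have Bp: "(Tm - x) powr \<kappa> > 0" using xT by simp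
      have ab: "\<And>A B::real. B > 0 \<Longrightarrow> A / (\<kappa> - 1) * ((1 - \<kappa>) * inverse B * (-1)) = A / B"
        using k by (simp add: field_simps)
      show ?thesis unfolding e1 e2 by (rule ab[OF Bp])
    qed
    ultimately show "((\<lambda>s. Tm powr \<kappa> / (\<kappa> - 1) * (Tm - s) powr (1 - \<kappa>)) has_vector_derivative (Tm / (Tm - x)) powr \<kappa>) (at x within {a..b})"
      by (simp add: has_real_derivative_iff_has_vector_derivative[symmetric] has_field_derivative_at_within)
  qed
  then show ?thesis using False by (simp add: integral_unique right_diff_distrib)
qed

lemma SI_sum_scaled:
  fixes W :: "real \<Rightarrow> nat \<Rightarrow> 'a \<Rightarrow> real"
  assumes fin: "finite Ks" and g: "C1 a b g g'" and ab: "a \<le> b"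
    and w: "\<And>k. k \<in> Ks \<Longrightarrow> continuous_on {a..b} (\<lambda>s. W s k \<omega>)"
  shows "(\<Sum>k\<in>Ks. SI W a b (\<lambda>s. c k * g s) (\<lambda>s. c k * g' s) k \<omega>)
    = g b * (\<Sum>k\<in>Ks. c k * W b k \<omega>) - g a * (\<Sum>k\<in>Ks. c k * W a k \<omega>)
      - integral {a..b} (\<lambda>s. g' s * (\<Sum>k\<in>Ks. c k * W s k \<omega>))"
proof -
  define X where "X = (\<lambda>s. \<Sum>k\<in>Ks. c k * W s k \<omega>)"
  have g'c: "continuous_on {a..b} g'" using g unfolding C1_def by simp
  have Xc: "continuous_on {a..b} X" unfolding X_def by (intro continuous_intros w)
  have ig': "integral {a..b} g' = g b - g a" by (rule C1_integral[OF g]) (use ab in auto)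
  have "(\<Sum>k\<in>Ks. integral {a..b} (\<lambda>s. c k * g' s * (W s k \<omega> - W a k \<omega>)))
      = integral {a..b} (\<lambda>s. \<Sum>k\<in>Ks. c k * g' s * (W s k \<omega> - W a k \<omega>))"
    by (rule integral_sum[symmetric, OF fin]) (intro integrable_continuous_real continuous_intros g'c w; simp)
  also have "\<dots> = integral {a..b} (\<lambda>s. g' s * X s - X a * g' s)"
    unfolding X_def by (rule integral_cong) (simp add: sum_distrib_left sum_distrib_right sum_subtractf algebra_simps)
  also have "\<dots> = integral {a..b} (\<lambda>s. g' s * X s) - X a * (g b - g a)"
    by (subst integral_diff) (auto intro!: integrable_continuous_real continuous_intros g'c Xc simp: ig')
  finally have I: "(\<Sum>k\<in>Ks. integral {a..b} (\<lambda>s. c k * g' s * (W s k \<omega> - W a k \<omega>)))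
      = integral {a..b} (\<lambda>s. g' s * X s) - X a * (g b - g a)" .
  have J: "(\<Sum>k\<in>Ks. c k * g b * (W b k \<omega> - W a k \<omega>)) = g b * (X b - X a)"
    unfolding X_def by (simp add: sum_distrib_left sum_subtractf algebra_simps)
  have "(\<Sum>k\<in>Ks. SI W a b (\<lambda>s. c k * g s) (\<lambda>s. c k * g' s) k \<omega>)
      = (\<Sum>k\<in>Ks. c k * g b * (W b k \<omega> - W a k \<omega>)) - (\<Sum>k\<in>Ks. integral {a..b} (\<lambda>s. c k * g' s * (W s k \<omega> - W a k \<omega>)))"
    unfolding SI_def by (simp add: sum_subtractf mult.assoc)
  also have "\<dots> = g b * (X b - X a) - (integral {a..b} (\<lambda>s. g' s * X s) - X a * (g b - g a))"
    unfolding I J ..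
  also have "\<dots> = g b * X b - g a * X a - integral {a..b} (\<lambda>s. g' s * X s)"
    by (simp add: algebra_simps)
  finally show ?thesis unfolding X_def .
qed

lemma ode_step:
  fixes Z X :: "real \<Rightarrow> real" and Tm \<kappa> m0 C T a b :: real
  assumes Tm: "0 < Tm" "T < Tm" and ab: "0 \<le> a" "a \<le> b" "b \<le> T"
    and Zc: "continuous_on {0..T} Z" and Xc: "continuous_on {0..T} X"
    and eqZ: "\<And>t. t \<in> {0..T} \<Longrightarrow> Z t = C + integral {0..t} (\<lambda>s. m0 - \<kappa> / (Tm - s) * Z s) + X t"
  shows "(Tm / (Tm - b)) powr \<kappa> * Z b = (Tm / (Tm - a)) powr \<kappa> * Z a
      + integral {a..b} (\<lambda>s. (Tm / (Tm - s)) powr \<kappa>) * m0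
      + ((Tm / (Tm - b)) powr \<kappa> * X b - (Tm / (Tm - a)) powr \<kappa> * X a
         - integral {a..b} (\<lambda>s. \<kappa> * (Tm / (Tm - s)) powr \<kappa> / (Tm - s) * X s))"
proof -
  define g where "g = (\<lambda>s. (Tm / (Tm - s)) powr \<kappa>)"
  define g' where "g' = (\<lambda>s. \<kappa> * (Tm / (Tm - s)) powr \<kappa> / (Tm - s))"
  define h where "h = (\<lambda>s. m0 - \<kappa> / (Tm - s) * Z s)"
  define Y where "Y = (\<lambda>t. C + integral {0..t} h)"
  have hc: "continuous_on {0..T} h" unfolding h_def using Tm
    by (intro continuous_intros Zc) auto
  have gC: "C1 a b g g'" unfolding g_def g'_def by (rule g_C1) (use Tm ab in auto)
  have gC0: "C1 0 T g g'" unfolding g_def g'_def by (rule g_C1) (use Tm in auto)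
  have YZ: "Y t = Z t - X t" if "t \<in> {0..T}" for t using eqZ[OF that] unfolding Y_def h_def by simp
  have der: "((\<lambda>t. g t * Y t) has_vector_derivative (g x * m0 - g' x * X x)) (at x within {a..b})"
    if x: "x \<in> {a..b}" for x
  proof -
    have x0: "x \<in> {0..T}" using x ab by auto
    have dY: "(Y has_real_derivative h x) (at x within {0..T})"
    proof -
      have "((\<lambda>u. integral {0..u} h) has_vector_derivative h x) (at x within {0..T})"
        by (rule integral_has_vector_derivative[OF hc x0])
      then have "((\<lambda>u. C + integral {0..u} h) has_vector_derivative (0 + h x)) (at x within {0..T})"
        by (intro has_vector_derivative_add has_vector_derivative_const)
      then show ?thesis unfolding Y_def has_real_derivative_iff_has_vector_derivative by simp
    qed
    have dg: "(g has_real_derivative g' x) (at x within {0..T})"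
      using gC0 x0 unfolding C1_def by auto
    have "((\<lambda>t. g t * Y t) has_real_derivative (g x * h x + g' x * Y x)) (at x within {0..T})"
      using DERIV_mult[OF dg dY] by (simp add: algebra_simps)
    moreover have "g x * h x + g' x * Y x = g x * m0 - g' x * X x"
    proof -
      have ab: "\<And>G D Zx Xx::real. G * (m0 - \<kappa> / D * Zx) + \<kappa> * G / D * (Zx - Xx) = G * m0 - \<kappa> * G / D * Xx"
        by (simp add: divide_inverse algebra_simps)
      show ?thesis unfolding YZ[OF x0] h_def g_def g'_def by (rule ab)
    qed
    ultimately have "((\<lambda>t. g t * Y t) has_real_derivative (g x * m0 - g' x * X x)) (at x within {0..T})"
      by simp
    then have "((\<lambda>t. g t * Y t) has_real_derivative (g x * m0 - g' x * X x)) (at x within {a..b})"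
      by (rule has_field_derivative_subset) (use ab in auto)
    then show ?thesis by (simp add: has_real_derivative_iff_has_vector_derivative)
  qed
  have "((\<lambda>x. g x * m0 - g' x * X x) has_integral (g b * Y b - g a * Y a)) {a..b}"
    by (rule fundamental_theorem_of_calculus[OF ab(2) der])
  then have "g b * Y b - g a * Y a = integral {a..b} (\<lambda>x. g x * m0 - g' x * X x)"
    by (simp add: integral_unique)
  also have "\<dots> = integral {a..b} g * m0 - integral {a..b} (\<lambda>x. g' x * X x)"
  proof -
    have c1: "continuous_on {a..b} g" by (rule C1_cont[OF gC])
    have c2: "continuous_on {a..b} g'" using gC unfolding C1_def by simp
    have c3: "continuous_on {a..b} X" by (rule continuous_on_subset[OF Xc]) (use ab in auto)
    show ?thesis
      by (subst integral_diff) (auto intro!: integrable_continuous_real continuous_intros c1 c2 c3)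
  qed
  finally have main: "g b * Y b - g a * Y a = integral {a..b} g * m0 - integral {a..b} (\<lambda>x. g' x * X x)" .
  have a0: "a \<in> {0..T}" and b0: "b \<in> {0..T}" using ab by auto
  show ?thesis using main unfolding YZ[OF a0] YZ[OF b0] g_def g'_def
    by (simp add: algebra_simps)
qed

lemma gaussian_rv_cong:
  assumes eq: "\<And>\<omega>. \<omega> \<in> space M \<Longrightarrow> X \<omega> = Y \<omega>" and g: "gaussian_rv M X"
  shows "gaussian_rv M Y"
proof -
  have m: "Y \<in> borel_measurable M" using g eq measurable_cong[of M X Y] unfolding gaussian_rv_def by simp
  have d: "distr M lborel X = distr M lborel Y" by (rule distr_cong) (use eq in auto)
  have ae: "AE \<omega> in M. X \<omega> = Y \<omega>" using eq by (intro AE_I2) auto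
  from g have "(\<exists>\<mu> \<sigma>. \<sigma> > 0 \<and> distributed M lborel X (normal_density \<mu> \<sigma>)) \<or> (\<exists>c. AE \<omega> in M. X \<omega> = c)"
    by (simp add: gaussian_rv_def)
  then show ?thesis
  proof
    assume "\<exists>\<mu> \<sigma>. \<sigma> > 0 \<and> distributed M lborel X (normal_density \<mu> \<sigma>)"
    then obtain \<mu> \<sigma> where s: "\<sigma> > 0" and D: "distributed M lborel X (normal_density \<mu> \<sigma>)" by blast
    have "distributed M lborel Y (normal_density \<mu> \<sigma>)"
      using D m unfolding distributed_def d by simp
    then show ?thesis using m s unfolding gaussian_rv_def by blast
  next
    assume "\<exists>c. AE \<omega> in M. X \<omega> = c"
    then obtain c where "AE \<omega> in M. X \<omega> = c" by blast
    with ae have "AE \<omega> in M. Y \<omega> = c" by eventually_elim simp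
    then show ?thesis using m unfolding gaussian_rv_def by blast
  qed
qed

lemma C1_scale: "C1 a b f f' \<Longrightarrow> C1 a b (\<lambda>s. c * f s) (\<lambda>s. c * f' s)"
  unfolding C1_def by (auto intro!: DERIV_cmult continuous_intros)

lemma sum_tri:
  assumes "lower_triangular d A" "i \<in> {1..d}"
  shows "(\<Sum>j\<in>{1..i}. A i j * x j) = (\<Sum>j\<in>{1..d}. A i j * x j)"
  by (rule sum.mono_neutral_left) (use assms in \<open>auto simp: lower_triangular_def\<close>)

theorem corollary1:
  fixes P :: "'a measure"
    and N :: nat and r T :: real and Tm :: "nat \<Rightarrow> real"
    and tS :: "nat \<Rightarrow> nat \<Rightarrow> real"
    and W F S :: "real \<Rightarrow> nat \<Rightarrow> 'a \<Rightarrow> real"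
    and \<mu>F \<mu>S \<eta>F \<eta>S :: "nat \<Rightarrow> real"
    and M :: nat
  defines "\<Sigma> \<equiv> cov_of (2 * N) tS"
  defines "\<sigma>F \<equiv> (\<lambda>i. sqrt (\<Sigma> i i))"
  defines "\<sigma>S \<equiv> (\<lambda>i. sqrt (\<Sigma> (N + i) (N + i)))"
  defines "Z \<equiv> Z_proc r Tm F S"
  defines "\<kappa> \<equiv> (\<lambda>i. \<eta>S i - \<eta>F i)"
  defines "m \<equiv> (\<lambda>i. r + \<mu>F i - \<mu>S i - (\<sigma>F i ^ 2 - \<sigma>S i ^ 2) / 2)"
  defines "\<phi> \<equiv> (\<lambda>n i. phi_coef T M (Tm i) (\<kappa> i) n)"
  defines "tg \<equiv> (\<lambda>n::nat. real n * T / real M)"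
  assumes P: "prob_space P"
    and N: "N \<ge> 1" and r: "r \<ge> 0" and T: "T > 0"
    and Tm: "\<forall>i\<in>{1..N}. T < Tm i"
    and tri: "lower_triangular (2 * N) tS"
    and posdef: "pos_def (2 * N) \<Sigma>"
    and eta: "\<forall>i\<in>{1..N}. \<eta>F i < \<eta>S i"
    and BM: "std_brownian P (2 * N) W"
    and meas: "\<forall>t\<in>{0..T}. \<forall>i\<in>{1..N}. F t i \<in> borel_measurable P \<and> S t i \<in> borel_measurable P"
    and pos: "\<forall>\<omega>\<in>space P. \<forall>t\<in>{0..T}. \<forall>i\<in>{1..N}. F t i \<omega> > 0 \<and> S t i \<omega> > 0"
    and cont: "\<forall>\<omega>\<in>space P. \<forall>i\<in>{1..N}.
                 continuous_on {0..T} (\<lambda>t. F t i \<omega>) \<and> continuous_on {0..T} (\<lambda>t. S t i \<omega>)"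
    and SDE_F: "\<forall>\<omega>\<in>space P. \<forall>t\<in>{0..T}. \<forall>i\<in>{1..N}.
       ln (F t i \<omega>) = ln (F 0 i \<omega>)
         + integral {0..t} (\<lambda>s. \<mu>F i - \<sigma>F i ^ 2 / 2 + \<eta>F i / (Tm i - s) * Z s i \<omega>)
         + (\<Sum>j\<in>{1..i}. tS i j * W t j \<omega>)"
    and SDE_S: "\<forall>\<omega>\<in>space P. \<forall>t\<in>{0..T}. \<forall>i\<in>{1..N}.
       ln (S t i \<omega>) = ln (S 0 i \<omega>)
         + integral {0..t} (\<lambda>s. \<mu>S i - \<sigma>S i ^ 2 / 2 + \<eta>S i / (Tm i - s) * Z s i \<omega>)
         + (\<Sum>j\<in>{1..N + i}. tS (N + i) j * W t j \<omega>)"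
    and etaS0: "\<forall>i\<in>{1..N}. \<eta>S i = 0"
    and M: "M \<ge> 1"
  shows "\<exists>\<epsilon> :: nat \<Rightarrow> nat \<Rightarrow> 'a \<Rightarrow> real.
     (\<forall>n\<in>{1..M}. \<forall>\<omega>\<in>space P. \<forall>i\<in>{1..N}.
        ln (S (tg n) i \<omega>) = ln (S (tg (n - 1)) i \<omega>) + T / real M * (\<mu>S i - \<sigma>S i ^ 2 / 2) + \<epsilon> n i \<omega>
      \<and> (Tm i / (Tm i - tg n)) powr \<kappa> i * Z (tg n) i \<omega>
          = (Tm i / (Tm i - tg (n - 1))) powr \<kappa> i * Z (tg (n - 1)) i \<omega> + \<phi> n i * m i + \<epsilon> n (N + i) \<omega>
      \<and> ln (F (tg n) i \<omega>) = Z (tg n) i \<omega> + ln (S (tg n) i \<omega>) + r * (Tm i - tg n))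
   \<and> prob_space.indep_vars P (\<lambda>_. Pi\<^sub>M {1..2 * N} (\<lambda>_. borel))
       (\<lambda>n \<omega>. \<lambda>k\<in>{1..2 * N}. \<epsilon> n k \<omega>) {1..M}
   \<and> (\<forall>n\<in>{1..M}. gaussian_vector P {1..2 * N} (\<epsilon> n))
   \<and> (\<forall>n\<in>{1..M}. \<forall>k\<in>{1..2 * N}. integral\<^sup>L P (\<epsilon> n k) = 0)
   \<and> (\<forall>n\<in>{1..M}. \<forall>i\<in>{1..N}. \<forall>j\<in>{1..N}.
        integral\<^sup>L P (\<lambda>\<omega>. \<epsilon> n i \<omega> * \<epsilon> n j \<omega>) = T / real M * \<Sigma> (N + i) (N + j)
      \<and> integral\<^sup>L P (\<lambda>\<omega>. \<epsilon> n i \<omega> * \<epsilon> n (N + j) \<omega>)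
          = (\<Sigma> j (N + i) - \<Sigma> (N + i) (N + j)) * \<phi> n j
      \<and> integral\<^sup>L P (\<lambda>\<omega>. \<epsilon> n (N + i) \<omega> * \<epsilon> n (N + j) \<omega>)
          = (\<Sigma> i j + \<Sigma> (N + i) (N + j) - \<Sigma> i (N + j) - \<Sigma> j (N + i))
            * integral {tg (n - 1)..tg n}
                (\<lambda>s. (Tm i / (Tm i - s)) powr \<kappa> i * (Tm j / (Tm j - s)) powr \<kappa> j))"

proof -
  interpret bmc P "2 * N" W unfolding bmc_def bmc_axioms_def using P BM by simp
  have M0: "M > 0" using M by simp
  have tgf: "0 \<le> tg (n - 1) \<and> tg (n - 1) < tg n \<and> tg n \<le> T \<and> tg n - tg (n - 1) = T / real M" if n: "n \<in> {1..M}" for n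
  proof -
    obtain m where nm: "n = Suc m" using n by (cases n) auto
    have le: "real (Suc m) \<le> real M" using n nm by simp
    have "real (Suc m) * T \<le> real M * T" using le T by (intro mult_right_mono) auto
    then show ?thesis using T M0 unfolding tg_def nm by (auto simp: field_simps)
  qed
  have Tmp: "0 < Tm i \<and> T < Tm i" if "i \<in> {1..N}" for i using Tm T that by force
  define g where "g = (\<lambda>i s. (Tm i / (Tm i - s)) powr \<kappa> i)"
  define g' where "g' = (\<lambda>i s. \<kappa> i * (Tm i / (Tm i - s)) powr \<kappa> i / (Tm i - s))"
  define c where "c = (\<lambda>i k. tS i k - tS (N + i) k)"
  define FF where "FF = (\<lambda>j k s. if j \<le> N then tS (N + j) k else c (j - N) k * g (j - N) s)"
  define FF' where "FF' = (\<lambda>j k (s::real). if j \<le> N then 0 else c (j - N) k * g' (j - N) s)"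
  define \<epsilon> where "\<epsilon> = (\<lambda>n j \<omega>. LSI W (2 * N) (tg (n - 1)) (tg n) (FF j) (FF' j) \<omega>)"
  have FFS: "FF j k = (\<lambda>_. tS (N + j) k)" "FF' j k = (\<lambda>_. 0)" if "j \<le> N" for j k
    using that unfolding FF_def FF'_def by auto
  have FFZ: "FF (N + i) k = (\<lambda>s. c i k * g i s)" "FF' (N + i) k = (\<lambda>s. c i k * g' i s)" if "i \<in> {1..N}" for i k
    using that unfolding FF_def FF'_def by auto
  have gC: "C1 (tg (n - 1)) (tg n) (g i) (g' i)" if n: "n \<in> {1..M}" and i: "i \<in> {1..N}" for n i
    unfolding g_def g'_def by (rule g_C1) (use Tmp[OF i] tgf[OF n] in auto)
  have FFC: "C1 (tg (n - 1)) (tg n) (FF j k) (FF' j k)" if n: "n \<in> {1..M}" and j: "j \<in> {1..2 * N}" for n j k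
  proof (cases "j \<le> N")
    case True
    show ?thesis unfolding FFS[OF True] by (rule C1_const)
  next
    case False
    then obtain i where i: "i \<in> {1..N}" and ji: "j = N + i" using j by (intro that[of "j - N"]) auto
    show ?thesis unfolding ji FFZ[OF i] by (rule C1_scale[OF gC[OF n i]])
  qed
  have gint0: "integral {tg (n - 1)..tg n} (g l) = \<phi> n l" if n: "n \<in> {1..M}" and l: "l \<in> {1..N}" for n l
  proof -
    have ab: "tg (n - 1) < tg n" and bT: "tg n \<le> T" using tgf[OF n] by auto
    show ?thesis
      using g_integral[of "Tm l" "tg (n - 1)" "tg n" "\<kappa> l"] Tmp[OF l] ab bT
      unfolding g_def \<phi>_def phi_coef_def tg_def by simp
  qed
  show ?thesis
  proof (intro exI[of _ \<epsilon>] conjI)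
    show "\<forall>n\<in>{1..M}. \<forall>\<omega>\<in>space P. \<forall>i\<in>{1..N}.
        ln (S (tg n) i \<omega>) = ln (S (tg (n - 1)) i \<omega>) + T / real M * (\<mu>S i - \<sigma>S i ^ 2 / 2) + \<epsilon> n i \<omega>
      \<and> (Tm i / (Tm i - tg n)) powr \<kappa> i * Z (tg n) i \<omega>
          = (Tm i / (Tm i - tg (n - 1))) powr \<kappa> i * Z (tg (n - 1)) i \<omega> + \<phi> n i * m i + \<epsilon> n (N + i) \<omega>
      \<and> ln (F (tg n) i \<omega>) = Z (tg n) i \<omega> + ln (S (tg n) i \<omega>) + r * (Tm i - tg n)"
    proof (intro ballI conjI)
      fix n \<omega> i assume n: "n \<in> {1..M}" and \<omega>: "\<omega> \<in> space P" and i: "i \<in> {1..N}"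
      have a0: "0 \<le> tg (n - 1)" and ab: "tg (n - 1) < tg n" and bT: "tg n \<le> T"
        and dab: "tg n - tg (n - 1) = T / real M" using tgf[OF n] by auto
      have a_in: "tg (n - 1) \<in> {0..T}" "tg n \<in> {0..T}" using a0 ab bT by auto
      have iN: "i \<le> N" "\<not> N + i \<le> N" "i \<le> 2 * N" "N + i \<le> 2 * N" using i by auto
      have posFS: "F t i \<omega> > 0" "S t i \<omega> > 0" if "t \<in> {0..T}" for t using pos \<omega> that i by auto
      have lnZ: "Z t i \<omega> = ln (F t i \<omega>) - ln (S t i \<omega>) - r * (Tm i - t)" if t: "t \<in> {0..T}" for t
        unfolding Z_def Z_proc_def using posFS[OF t] by (simp add: ln_div)
      show "ln (F (tg n) i \<omega>) = Z (tg n) i \<omega> + ln (S (tg n) i \<omega>) + r * (Tm i - tg n)"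
        using lnZ[OF a_in(2)] by simp
      have Seq: "ln (S t i \<omega>) = ln (S 0 i \<omega>) + t * (\<mu>S i - \<sigma>S i ^ 2 / 2) + (\<Sum>k\<in>{1..2 * N}. tS (N + i) k * W t k \<omega>)"
        if t: "t \<in> {0..T}" for t
      proof -
        have e1: "ln (S t i \<omega>) = ln (S 0 i \<omega>) + integral {0..t} (\<lambda>s. \<mu>S i - \<sigma>S i ^ 2 / 2 + \<eta>S i / (Tm i - s) * Z s i \<omega>)
           + (\<Sum>j\<in>{1..N + i}. tS (N + i) j * W t j \<omega>)" using SDE_S \<omega> t i by blast
        have e2: "integral {0..t} (\<lambda>s. \<mu>S i - \<sigma>S i ^ 2 / 2 + \<eta>S i / (Tm i - s) * Z s i \<omega>) = t * (\<mu>S i - \<sigma>S i ^ 2 / 2)"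
          using etaS0 i t by simp
        have e3: "(\<Sum>j\<in>{1..N + i}. tS (N + i) j * W t j \<omega>) = (\<Sum>k\<in>{1..2 * N}. tS (N + i) k * W t k \<omega>)"
          by (rule sum_tri[OF tri]) (use i in auto)
        show ?thesis using e1 unfolding e2 e3 .
      qed
      have eps_i: "\<epsilon> n i \<omega> = (\<Sum>k\<in>{1..2 * N}. tS (N + i) k * (W (tg n) k \<omega> - W (tg (n - 1)) k \<omega>))"
        unfolding \<epsilon>_def LSI_def SI_def using iN by (simp add: FFS)
      show "ln (S (tg n) i \<omega>) = ln (S (tg (n - 1)) i \<omega>) + T / real M * (\<mu>S i - \<sigma>S i ^ 2 / 2) + \<epsilon> n i \<omega>"
        unfolding eps_i Seq[OF a_in(1)] Seq[OF a_in(2)] dab[symmetric]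
        by (simp add: sum_subtractf right_diff_distrib left_diff_distrib diff_divide_distrib)
      define X where "X = (\<lambda>t. \<Sum>k\<in>{1..2 * N}. c i k * W t k \<omega>)"
      have Zc: "continuous_on {0..T} (\<lambda>t. Z t i \<omega>)"
      proof -
        have cF: "continuous_on {0..T} (\<lambda>t. F t i \<omega>)" and cS: "continuous_on {0..T} (\<lambda>t. S t i \<omega>)"
          using cont \<omega> i by auto
        have "continuous_on {0..T} (\<lambda>t. ln (F t i \<omega> / S t i \<omega>) - r * (Tm i - t))"
        proof -
          have nz: "F t i \<omega> \<noteq> 0" "S t i \<omega> \<noteq> 0" if "t \<in> {0..T}" for t using posFS[OF that] by auto
          show ?thesis by (intro continuous_intros cF cS) (use nz in auto)
        qed
        then show ?thesis unfolding Z_def Z_proc_def .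
      qed
      have Xc: "continuous_on {0..T} X" unfolding X_def
        by (intro continuous_intros W_cont[OF \<omega>]) auto
      define hF where "hF = (\<lambda>s. \<mu>F i - \<sigma>F i ^ 2 / 2 + \<eta>F i / (Tm i - s) * Z s i \<omega>)"
      have eqZ: "Z t i \<omega> = (ln (F 0 i \<omega>) - ln (S 0 i \<omega>) - r * Tm i)
          + integral {0..t} (\<lambda>s. m i - \<kappa> i / (Tm i - s) * Z s i \<omega>) + X t" if t: "t \<in> {0..T}" for t
      proof -
        have Feq: "ln (F t i \<omega>) = ln (F 0 i \<omega>) + integral {0..t} hF + (\<Sum>j\<in>{1..i}. tS i j * W t j \<omega>)"
          using SDE_F \<omega> t i unfolding hF_def by blast
        have e3: "(\<Sum>j\<in>{1..i}. tS i j * W t j \<omega>) = (\<Sum>k\<in>{1..2 * N}. tS i k * W t k \<omega>)"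
          by (rule sum_tri[OF tri]) (use i in auto)
        have Xt: "X t = (\<Sum>k\<in>{1..2 * N}. tS i k * W t k \<omega>) - (\<Sum>k\<in>{1..2 * N}. tS (N + i) k * W t k \<omega>)"
          unfolding X_def c_def by (simp add: sum_subtractf left_diff_distrib)
        have hFc: "continuous_on {0..t} hF" unfolding hF_def
          using Tmp[OF i] t by (intro continuous_intros continuous_on_subset[OF Zc]) auto
        have ieq: "(\<lambda>s. m i - \<kappa> i / (Tm i - s) * Z s i \<omega>) = (\<lambda>s. hF s + (r - (\<mu>S i - \<sigma>S i ^ 2 / 2)))"
        proof (rule ext)
          fix s
          have e0: "\<eta>S i = 0" using etaS0 i by auto
          have "\<kappa> i / (Tm i - s) * Z s i \<omega> = - (\<eta>F i / (Tm i - s) * Z s i \<omega>)" unfolding \<kappa>_def e0 by simp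
          then show "m i - \<kappa> i / (Tm i - s) * Z s i \<omega> = hF s + (r - (\<mu>S i - \<sigma>S i ^ 2 / 2))"
          proof -
            have ab: "\<And>r mF mS a b K E :: real. K = - E \<Longrightarrow> r + mF - mS - (a - b) / 2 - K = mF - a / 2 + E + (r - (mS - b / 2))"
              by (simp add: field_simps)
            show ?thesis unfolding m_def hF_def by (rule ab) fact
          qed
        qed
        have "integral {0..t} (\<lambda>s. m i - \<kappa> i / (Tm i - s) * Z s i \<omega>)
            = integral {0..t} hF + integral {0..t} (\<lambda>s. r - (\<mu>S i - \<sigma>S i ^ 2 / 2))"
          unfolding ieq by (rule integral_add) (auto intro: integrable_continuous_real hFc)
        also have "integral {0..t} (\<lambda>s. r - (\<mu>S i - \<sigma>S i ^ 2 / 2)) = r * t - t * (\<mu>S i - \<sigma>S i ^ 2 / 2)"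
          using t by (simp add: algebra_simps)
        finally have I: "integral {0..t} (\<lambda>s. m i - \<kappa> i / (Tm i - s) * Z s i \<omega>)
            = integral {0..t} hF + (r * t - t * (\<mu>S i - \<sigma>S i ^ 2 / 2))" .
        have rr: "r * (Tm i - t) = r * Tm i - r * t" by (simp add: algebra_simps)
        show ?thesis unfolding lnZ[OF t] Feq Seq[OF t] I Xt e3 rr by simp
      qed
      have OD: "(Tm i / (Tm i - tg n)) powr \<kappa> i * Z (tg n) i \<omega> = (Tm i / (Tm i - tg (n - 1))) powr \<kappa> i * Z (tg (n - 1)) i \<omega>
          + integral {tg (n - 1)..tg n} (\<lambda>s. (Tm i / (Tm i - s)) powr \<kappa> i) * m i
          + ((Tm i / (Tm i - tg n)) powr \<kappa> i * X (tg n) - (Tm i / (Tm i - tg (n - 1))) powr \<kappa> i * X (tg (n - 1))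
             - integral {tg (n - 1)..tg n} (\<lambda>s. \<kappa> i * (Tm i / (Tm i - s)) powr \<kappa> i / (Tm i - s) * X s))"
      proof -
        have T1: "0 < Tm i" "T < Tm i" using Tmp[OF i] by auto
        have le: "tg (n - 1) \<le> tg n" using ab by simp
        show ?thesis by (rule ode_step[OF T1 a0 le bT Zc Xc eqZ])
      qed
      have epsZ: "\<epsilon> n (N + i) \<omega> = (Tm i / (Tm i - tg n)) powr \<kappa> i * X (tg n) - (Tm i / (Tm i - tg (n - 1))) powr \<kappa> i * X (tg (n - 1))
             - integral {tg (n - 1)..tg n} (\<lambda>s. \<kappa> i * (Tm i / (Tm i - s)) powr \<kappa> i / (Tm i - s) * X s)"
      proof -
        have "\<epsilon> n (N + i) \<omega> = (\<Sum>k\<in>{1..2 * N}. SI W (tg (n - 1)) (tg n) (\<lambda>s. c i k * g i s) (\<lambda>s. c i k * g' i s) k \<omega>)"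
          unfolding \<epsilon>_def LSI_def FFZ[OF i] ..
        also have "\<dots> = g i (tg n) * X (tg n) - g i (tg (n - 1)) * X (tg (n - 1)) - integral {tg (n - 1)..tg n} (\<lambda>s. g' i s * X s)"
          unfolding X_def by (rule SI_sum_scaled[OF _ gC[OF n i]]) (use W_cont[OF \<omega> _ a0] ab in auto)
        finally show ?thesis unfolding g_def g'_def .
      qed
      have gi: "integral {tg (n - 1)..tg n} (\<lambda>s. (Tm i / (Tm i - s)) powr \<kappa> i) = \<phi> n i"
        using gint0[OF n i] unfolding g_def .
      show "(Tm i / (Tm i - tg n)) powr \<kappa> i * Z (tg n) i \<omega>
          = (Tm i / (Tm i - tg (n - 1))) powr \<kappa> i * Z (tg (n - 1)) i \<omega> + \<phi> n i * m i + \<epsilon> n (N + i) \<omega>"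
        using OD unfolding epsZ gi by simp
    qed
    show "prob_space.indep_vars P (\<lambda>_. Pi\<^sub>M {1..2 * N} (\<lambda>_. borel))
       (\<lambda>n \<omega>. \<lambda>k\<in>{1..2 * N}. \<epsilon> n k \<omega>) {1..M}"
    proof -
      have "indep_vars (\<lambda>_. Pi\<^sub>M {1..2 * N} (\<lambda>_. borel))
        (\<lambda>n \<omega>. \<lambda>j\<in>{1..2 * N}. LSI W (2 * N) (real (n - 1) * T / real M) (real n * T / real M) (FF j) (FF' j) \<omega>) {1..M}"
        by (rule indep_LSI[OF T M]) (use FFC in \<open>simp add: tg_def\<close>)
      then show ?thesis unfolding \<epsilon>_def tg_def by simp
    qed
    show "\<forall>n\<in>{1..M}. gaussian_vector P {1..2 * N} (\<epsilon> n)"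
    proof (intro ballI)
      fix n assume n: "n \<in> {1..M}"
      have a0: "0 \<le> tg (n - 1)" and ab: "tg (n - 1) < tg n" using tgf[OF n] by auto
      show "gaussian_vector P {1..2 * N} (\<epsilon> n)" unfolding gaussian_vector_def
      proof (intro allI)
        fix cc :: "nat \<Rightarrow> real"
        have CF: "C1 (tg (n - 1)) (tg n) (\<lambda>s. \<Sum>j\<in>{1..2 * N}. cc j * FF j k s) (\<lambda>s. \<Sum>j\<in>{1..2 * N}. cc j * FF' j k s)"
          if k: "k \<in> {1..2 * N}" for k
          by (rule C1_sum) (use FFC[OF n] in auto)
        have G: "gaussian_rv P (LSI W (2 * N) (tg (n - 1)) (tg n) (\<lambda>k s. \<Sum>j\<in>{1..2 * N}. cc j * FF j k s) (\<lambda>k s. \<Sum>j\<in>{1..2 * N}. cc j * FF' j k s))"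
          by (rule LSI_props(2)[OF a0 ab CF])
        have eq: "LSI W (2 * N) (tg (n - 1)) (tg n) (\<lambda>k s. \<Sum>j\<in>{1..2 * N}. cc j * FF j k s) (\<lambda>k s. \<Sum>j\<in>{1..2 * N}. cc j * FF' j k s) \<omega>
            = (\<Sum>j\<in>{1..2 * N}. cc j * \<epsilon> n j \<omega>)" if \<omega>: "\<omega> \<in> space P" for \<omega>
          unfolding \<epsilon>_def
        proof (rule LSI_lin)
          show "continuous_on {tg (n - 1)..tg n} (FF' j k)" if "j \<in> {1..2 * N}" "k \<in> {1..2 * N}" for j k
            using FFC[OF n that(1), of k] unfolding C1_def by simp
          show "continuous_on {tg (n - 1)..tg n} (\<lambda>s. W s k \<omega>)" if "k \<in> {1..2 * N}" for k
            by (rule W_cont[OF \<omega> that a0])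
        qed simp
        show "gaussian_rv P (\<lambda>\<omega>. \<Sum>k\<in>{1..2 * N}. cc k * \<epsilon> n k \<omega>)"
          by (rule gaussian_rv_cong[OF eq G]) simp
      qed
    qed
    show "\<forall>n\<in>{1..M}. \<forall>k\<in>{1..2 * N}. integral\<^sup>L P (\<epsilon> n k) = 0"
    proof (intro ballI)
      fix n k assume n: "n \<in> {1..M}" and k: "k \<in> {1..2 * N}"
      have a0: "0 \<le> tg (n - 1)" and ab: "tg (n - 1) < tg n" using tgf[OF n] by auto
      show "integral\<^sup>L P (\<epsilon> n k) = 0" unfolding \<epsilon>_def
        by (rule LSI_props(4)[OF a0 ab FFC[OF n k]])
    qed
    show "\<forall>n\<in>{1..M}. \<forall>i\<in>{1..N}. \<forall>j\<in>{1..N}.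
        integral\<^sup>L P (\<lambda>\<omega>. \<epsilon> n i \<omega> * \<epsilon> n j \<omega>) = T / real M * \<Sigma> (N + i) (N + j)
      \<and> integral\<^sup>L P (\<lambda>\<omega>. \<epsilon> n i \<omega> * \<epsilon> n (N + j) \<omega>)
          = (\<Sigma> j (N + i) - \<Sigma> (N + i) (N + j)) * \<phi> n j
      \<and> integral\<^sup>L P (\<lambda>\<omega>. \<epsilon> n (N + i) \<omega> * \<epsilon> n (N + j) \<omega>)
          = (\<Sigma> i j + \<Sigma> (N + i) (N + j) - \<Sigma> i (N + j) - \<Sigma> j (N + i))
            * integral {tg (n - 1)..tg n}
                (\<lambda>s. (Tm i / (Tm i - s)) powr \<kappa> i * (Tm j / (Tm j - s)) powr \<kappa> j)"
    proof (intro ballI)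
      fix n i j assume n: "n \<in> {1..M}" and i: "i \<in> {1..N}" and j: "j \<in> {1..N}"
      have a0: "0 \<le> tg (n - 1)" and ab: "tg (n - 1) < tg n" and bT: "tg n \<le> T"
        and dab: "tg n - tg (n - 1) = T / real M" using tgf[OF n] by auto
      have cov: "integral\<^sup>L P (\<lambda>\<omega>. \<epsilon> n p \<omega> * \<epsilon> n q \<omega>)
          = (\<Sum>k\<in>{1..2 * N}. integral {tg (n - 1)..tg n} (\<lambda>s. FF p k s * FF q k s))"
        if "p \<in> {1..2 * N}" "q \<in> {1..2 * N}" for p q
        unfolding \<epsilon>_def by (rule LSI_cov[OF a0 ab FFC[OF n that(1)] FFC[OF n that(2)]])
      note gint = gint0[OF n]
      have iN: "i \<le> N" "j \<le> N" "\<not> N + i \<le> N" "\<not> N + j \<le> N" using i j by auto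
      have i2: "i \<in> {1..2 * N}" "j \<in> {1..2 * N}" "N + i \<in> {1..2 * N}" "N + j \<in> {1..2 * N}" using i j by auto
      have le: "tg (n - 1) \<le> tg n" using ab by simp
      show "integral\<^sup>L P (\<lambda>\<omega>. \<epsilon> n i \<omega> * \<epsilon> n j \<omega>) = T / real M * \<Sigma> (N + i) (N + j)
      \<and> integral\<^sup>L P (\<lambda>\<omega>. \<epsilon> n i \<omega> * \<epsilon> n (N + j) \<omega>)
          = (\<Sigma> j (N + i) - \<Sigma> (N + i) (N + j)) * \<phi> n j
      \<and> integral\<^sup>L P (\<lambda>\<omega>. \<epsilon> n (N + i) \<omega> * \<epsilon> n (N + j) \<omega>)
          = (\<Sigma> i j + \<Sigma> (N + i) (N + j) - \<Sigma> i (N + j) - \<Sigma> j (N + i))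
            * integral {tg (n - 1)..tg n}
                (\<lambda>s. (Tm i / (Tm i - s)) powr \<kappa> i * (Tm j / (Tm j - s)) powr \<kappa> j)"
      proof (intro conjI)
        have "integral\<^sup>L P (\<lambda>\<omega>. \<epsilon> n i \<omega> * \<epsilon> n j \<omega>)
            = (\<Sum>k\<in>{1..2 * N}. integral {tg (n - 1)..tg n} (\<lambda>s. FF i k s * FF j k s))"
          by (rule cov[OF i2(1,2)])
        also have "\<dots> = (\<Sum>k\<in>{1..2 * N}. T / real M * (tS (N + i) k * tS (N + j) k))"
        proof (rule sum.cong[OF refl])
          fix k
          have "integral {tg (n - 1)..tg n} (\<lambda>s. FF i k s * FF j k s)
              = integral {tg (n - 1)..tg n} (\<lambda>s. tS (N + i) k * tS (N + j) k)"
            by (simp add: FFS iN)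
          also have "\<dots> = (tg n - tg (n - 1)) * (tS (N + i) k * tS (N + j) k)"
            using le by simp
          finally show "integral {tg (n - 1)..tg n} (\<lambda>s. FF i k s * FF j k s) = T / real M * (tS (N + i) k * tS (N + j) k)"
            unfolding dab .
        qed
        also have "\<dots> = T / real M * \<Sigma> (N + i) (N + j)"
          unfolding \<Sigma>_def cov_of_def by (simp add: sum_distrib_left)
        finally show "integral\<^sup>L P (\<lambda>\<omega>. \<epsilon> n i \<omega> * \<epsilon> n j \<omega>) = T / real M * \<Sigma> (N + i) (N + j)" .
      next
        have "integral\<^sup>L P (\<lambda>\<omega>. \<epsilon> n i \<omega> * \<epsilon> n (N + j) \<omega>)
            = (\<Sum>k\<in>{1..2 * N}. integral {tg (n - 1)..tg n} (\<lambda>s. FF i k s * FF (N + j) k s))"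
          by (rule cov[OF i2(1,4)])
        also have "\<dots> = (\<Sum>k\<in>{1..2 * N}. tS (N + i) k * c j k * integral {tg (n - 1)..tg n} (g j))"
          by (simp add: FFS iN FFZ[OF j] mult.assoc)
        also have "\<dots> = (\<Sigma> j (N + i) - \<Sigma> (N + i) (N + j)) * \<phi> n j"
          unfolding gint[OF j] \<Sigma>_def cov_of_def c_def
          by (simp add: sum_distrib_left sum_distrib_right sum_subtractf[symmetric] algebra_simps)
        finally show "integral\<^sup>L P (\<lambda>\<omega>. \<epsilon> n i \<omega> * \<epsilon> n (N + j) \<omega>) = (\<Sigma> j (N + i) - \<Sigma> (N + i) (N + j)) * \<phi> n j" .
      next
        have "integral\<^sup>L P (\<lambda>\<omega>. \<epsilon> n (N + i) \<omega> * \<epsilon> n (N + j) \<omega>)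
            = (\<Sum>k\<in>{1..2 * N}. integral {tg (n - 1)..tg n} (\<lambda>s. FF (N + i) k s * FF (N + j) k s))"
          by (rule cov[OF i2(3,4)])
        also have "\<dots> = (\<Sum>k\<in>{1..2 * N}. c i k * c j k * integral {tg (n - 1)..tg n} (\<lambda>s. g i s * g j s))"
        proof (rule sum.cong[OF refl])
          fix k
          have "integral {tg (n - 1)..tg n} (\<lambda>s. FF (N + i) k s * FF (N + j) k s)
              = integral {tg (n - 1)..tg n} (\<lambda>s. (c i k * c j k) * (g i s * g j s))"
            by (simp add: FFZ[OF i] FFZ[OF j] mult_ac)
          also have "\<dots> = c i k * c j k * integral {tg (n - 1)..tg n} (\<lambda>s. g i s * g j s)"
            by simp
          finally show "integral {tg (n - 1)..tg n} (\<lambda>s. FF (N + i) k s * FF (N + j) k s)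
              = c i k * c j k * integral {tg (n - 1)..tg n} (\<lambda>s. g i s * g j s)" .
        qed
        also have "\<dots> = (\<Sigma> i j + \<Sigma> (N + i) (N + j) - \<Sigma> i (N + j) - \<Sigma> j (N + i))
            * integral {tg (n - 1)..tg n} (\<lambda>s. (Tm i / (Tm i - s)) powr \<kappa> i * (Tm j / (Tm j - s)) powr \<kappa> j)"
          unfolding \<Sigma>_def cov_of_def c_def g_def
          by (simp add: sum_distrib_left sum_distrib_right sum_subtractf[symmetric] sum.distrib[symmetric] algebra_simps)
        finally show "integral\<^sup>L P (\<lambda>\<omega>. \<epsilon> n (N + i) \<omega> * \<epsilon> n (N + j) \<omega>)
          = (\<Sigma> i j + \<Sigma> (N + i) (N + j) - \<Sigma> i (N + j) - \<Sigma> j (N + i))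
            * integral {tg (n - 1)..tg n}
                (\<lambda>s. (Tm i / (Tm i - s)) powr \<kappa> i * (Tm j / (Tm j - s)) powr \<kappa> j)" .
      qed
    qed
  qed
qed

end
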